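(* Each of the following forms graphs is geodesic-transitive: the bilinear forms graph $\mathrm{Bil}(m,k,q)$ ($m\le k$), the alternating forms graph $\mathrm{Alt}(k,q)$, and the Hermitian forms graph $\mathrm{Her}(k,r)$.
   Context: $\mathrm{Bil}(m,k,q)$: vertices are the $m\times k$ matrices over $\mathbb{F}_q$, $X,Y$ adjacent iff $\mathrm{rk}(X-Y)=1$ (equivalently, bilinear maps $\mathbb{F}_q^m\times\mathbb{F}_q^k\to\mathbb{F}_q$). $\mathrm{Alt}(k,q)$: vertices are the skew-symmetric $k\times k$ matrices over $\mathbb{F}_q$ with zero diagonal (alternating forms on $\mathbb{F}_q^k$), $X,Y$ adjacent iff $\mathrm{rk}(X-Y)=2$. $\mathrm{Her}(k,r)$: with $q=r^2$ and $\sigma$ the field automorphism of $\mathbb{F}_q$ of order $2$, vertices are the $k\times k$ Hermitian matrices $M$ over $\mathbb{F}_q$ (i.e. $M^{\mathsf T}=M^{\sigma}$), $X,Y$ adjacent iff $\mathrm{rk}(X-Y)=1$. A geodesic of length $\ell$ is a vertex sequence $(v_0,\dots,v_\ell)$ with consecutive vertices adjacent and $d(v_0,v_\ell)=\ell$; a graph is geodesic-transitive if its automorphism group is transitive on geodesics of each length. *)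

theory Defs
  imports "HOL-Analysis.Analysis"
begin

definition is_walk :: "'v set \<Rightarrow> ('v \<Rightarrow> 'v \<Rightarrow> bool) \<Rightarrow> 'v list \<Rightarrow> bool" where
  "is_walk V adj p \<longleftrightarrow> p \<noteq> [] \<and> set p \<subseteq> V \<and>
     (\<forall>i. Suc i < length p \<longrightarrow> adj (p ! i) (p ! Suc i))"

definition graph_dist :: "'v set \<Rightarrow> ('v \<Rightarrow> 'v \<Rightarrow> bool) \<Rightarrow> 'v \<Rightarrow> 'v \<Rightarrow> nat" where
  "graph_dist V adj u v =
     (LEAST n. \<exists>p. is_walk V adj p \<and> hd p = u \<and> last p = v \<and> length p = Suc n)"

definition is_geodesic :: "'v set \<Rightarrow> ('v \<Rightarrow> 'v \<Rightarrow> bool) \<Rightarrow> nat \<Rightarrow> 'v list \<Rightarrow> bool" where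
  "is_geodesic V adj l p \<longleftrightarrow> is_walk V adj p \<and> length p = Suc l \<and>
     graph_dist V adj (hd p) (last p) = l"

definition graph_automorphism :: "'v set \<Rightarrow> ('v \<Rightarrow> 'v \<Rightarrow> bool) \<Rightarrow> ('v \<Rightarrow> 'v) \<Rightarrow> bool" where
  "graph_automorphism V adj f \<longleftrightarrow> bij_betw f V V \<and>
     (\<forall>x\<in>V. \<forall>y\<in>V. adj (f x) (f y) \<longleftrightarrow> adj x y)"

definition geodesic_transitive :: "'v set \<Rightarrow> ('v \<Rightarrow> 'v \<Rightarrow> bool) \<Rightarrow> bool" where
  "geodesic_transitive V adj \<longleftrightarrow>
     (\<forall>l p p'. is_geodesic V adj l p \<and> is_geodesic V adj l p' \<longrightarrow>
        (\<exists>f. graph_automorphism V adj f \<and> map f p = p'))"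

text \<open>Bilinear forms graph Bil(m,k,q): all m x k matrices (rows indexed by 'm, columns by 'k).\<close>
definition bil_adj :: "'a::field^'k^'m \<Rightarrow> 'a^'k^'m \<Rightarrow> bool" where
  "bil_adj X Y \<longleftrightarrow> rank (X - Y) = 1"

definition alt_verts :: "('a::field^'k^'k) set" where
  "alt_verts = {X. transpose X = - X \<and> (\<forall>i. X $ i $ i = 0)}"

definition alt_adj :: "'a::field^'k^'k \<Rightarrow> 'a^'k^'k \<Rightarrow> bool" where
  "alt_adj X Y \<longleftrightarrow> rank (X - Y) = 2"

text \<open>Hermitian forms graph Her(k,r) w.r.t. the involutory field automorphism sigma:
  M^T = M^sigma.\<close>
definition her_verts :: "('a \<Rightarrow> 'a) \<Rightarrow> ('a::field^'k^'k) set" where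
  "her_verts \<sigma> = {M. \<forall>i j. M $ j $ i = \<sigma> (M $ i $ j)}"

definition her_adj :: "'a::field^'k^'k \<Rightarrow> 'a^'k^'k \<Rightarrow> bool" where
  "her_adj X Y \<longleftrightarrow> rank (X - Y) = 1"

definition field_automorphism :: "('a::field \<Rightarrow> 'a) \<Rightarrow> bool" where
  "field_automorphism \<sigma> \<longleftrightarrow> bij \<sigma> \<and> (\<forall>x y. \<sigma> (x + y) = \<sigma> x + \<sigma> y) \<and>
     (\<forall>x y. \<sigma> (x * y) = \<sigma> x * \<sigma> y) \<and> \<sigma> 1 = 1"

end

theory Submission
  imports Defs
begin

lemma is_walk_single: "x \<in> V \<Longrightarrow> is_walk V adj [x]"
  by (simp add: is_walk_def)

lemma is_walk_Cons:
  assumes "q \<noteq> []"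
  shows "is_walk V adj (a # q) \<longleftrightarrow> a \<in> V \<and> adj a (hd q) \<and> is_walk V adj q"
proof
  assume h: "is_walk V adj (a # q)"
  have "\<forall>i. Suc i < length (a#q) \<longrightarrow> adj ((a#q) ! i) ((a#q) ! Suc i)" using h unfolding is_walk_def by blast
  moreover have "Suc 0 < length (a#q)" using assms by simp
  ultimately have "adj ((a#q) ! 0) ((a#q) ! Suc 0)" by blast
  hence "adj a (hd q)" using assms by (simp add: hd_conv_nth)
  moreover have "is_walk V adj q" unfolding is_walk_def
  proof (intro conjI allI impI)
    show "q \<noteq> []" by fact
    show "set q \<subseteq> V" using h unfolding is_walk_def by auto
    fix i assume "Suc i < length q"
    then have "adj ((a#q) ! Suc i) ((a#q) ! Suc (Suc i))" using h unfolding is_walk_def by auto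
    then show "adj (q ! i) (q ! Suc i)" by simp
  qed
  ultimately show "a \<in> V \<and> adj a (hd q) \<and> is_walk V adj q" using h unfolding is_walk_def by auto
next
  assume h: "a \<in> V \<and> adj a (hd q) \<and> is_walk V adj q"
  show "is_walk V adj (a # q)" unfolding is_walk_def
  proof (intro conjI allI impI)
    show "a # q \<noteq> []" by simp
    show "set (a # q) \<subseteq> V" using h unfolding is_walk_def by auto
    fix i assume i: "Suc i < length (a # q)"
    show "adj ((a # q) ! i) ((a # q) ! Suc i)"
    proof (cases i)
      case 0 then show ?thesis using h assms by (simp add: hd_conv_nth)
    next
      case (Suc j) then show ?thesis using h i unfolding is_walk_def by auto
    qed
  qed
qed

lemma telescope:
  fixes p :: "'v::ab_group_add list"
  shows "i < length p \<Longrightarrow> p ! i - p ! 0 = (\<Sum>j<i. p ! Suc j - p ! j)"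
  by (induction i) (auto simp: algebra_simps)

lemma gt_generic:
  fixes V :: "'v::ab_group_add set" and \<rho> :: "'v \<Rightarrow> nat" and s :: nat
    and adj :: "'v \<Rightarrow> 'v \<Rightarrow> bool"
  assumes adj: "\<And>X Y. adj X Y \<longleftrightarrow> \<rho> (X - Y) = s"
    and V0: "0 \<in> V" and Vadd: "\<And>X Y. X\<in>V \<Longrightarrow> Y\<in>V \<Longrightarrow> X + Y \<in> V"
    and Vneg: "\<And>X. X\<in>V \<Longrightarrow> -X \<in> V"
    and neg: "\<And>X. \<rho> (-X) = \<rho> X" and spos: "s > 0" and rho0: "\<rho> 0 = 0"
    and sub: "\<And>X D. X\<in>V \<Longrightarrow> D\<in>V \<Longrightarrow> \<rho> D = s \<Longrightarrow> \<rho> (X + D) \<le> \<rho> X + s"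
    and red: "\<And>X. X\<in>V \<Longrightarrow> X\<noteq>0 \<Longrightarrow> \<exists>D\<in>V. \<rho> D = s \<and> \<rho> (X - D) + s \<le> \<rho> X"
    and ext: "\<And>l d d'. (\<forall>j<l. d j \<in> V \<and> \<rho> (d j) = s) \<Longrightarrow> (\<forall>j<l. d' j \<in> V \<and> \<rho> (d' j) = s)
       \<Longrightarrow> \<rho> (\<Sum>j<l. d j) = s * l \<Longrightarrow> \<rho> (\<Sum>j<l. d' j) = s * l
       \<Longrightarrow> \<exists>L. (\<forall>X Y. L (X + Y) = L X + L Y) \<and> bij_betw L V V \<and>
              (\<forall>Y\<in>V. \<rho> (L Y) = s \<longleftrightarrow> \<rho> Y = s) \<and> (\<forall>j<l. L (d j) = d' j)"
  shows "geodesic_transitive V adj"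
proof -
  have Vdiff: "X - Y \<in> V" if "X \<in> V" "Y \<in> V" for X Y
    using Vadd[OF that(1) Vneg[OF that(2)]] by simp
  have adj_sym: "adj X Y \<longleftrightarrow> adj Y X" for X Y
    using neg[of "X - Y"] by (simp add: adj)
  have walk_ex: "\<forall>A Z. A \<in> V \<longrightarrow> Z \<in> V \<longrightarrow> \<rho> Z = k \<longrightarrow>
      (\<exists>p. is_walk V adj p \<and> hd p = A \<and> last p = A + Z \<and> s * (length p - 1) \<le> \<rho> Z)" for k
  proof (induction k rule: less_induct)
    case (less k)
    show ?case
    proof (intro allI impI)
      fix A Z assume A: "A \<in> V" and Z: "Z \<in> V" and k: "\<rho> Z = k"
      show "\<exists>p. is_walk V adj p \<and> hd p = A \<and> last p = A + Z \<and> s * (length p - 1) \<le> \<rho> Z"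
      proof (cases "Z = 0")
        case True
        then show ?thesis using A by (intro exI[of _ "[A]"]) (simp add: is_walk_single)
      next
        case False
        obtain D where D: "D \<in> V" "\<rho> D = s" "\<rho> (Z - D) + s \<le> \<rho> Z" using red[OF Z False] by blast
        have lt: "\<rho> (Z - D) < k" using D k spos by simp
        have AD: "A + D \<in> V" using A D Vadd by auto
        have ZD: "Z - D \<in> V" using Z D Vdiff by auto
        obtain q where q: "is_walk V adj q" "hd q = A + D" "last q = A + D + (Z - D)"
          "s * (length q - 1) \<le> \<rho> (Z - D)"
          using less.IH[OF lt] AD ZD by blast
        have qne: "q \<noteq> []" using q(1) unfolding is_walk_def by auto
        have "adj A (hd q)" using q(2) D(2) neg[of D] by (simp add: adj)
        then have w: "is_walk V adj (A # q)" using is_walk_Cons[OF qne] A q(1) by blast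
        have "s * (length (A # q) - 1) = s * (length q - 1) + s" using qne
          by (cases q) auto
        also have "\<dots> \<le> \<rho> Z" using q(4) D(3) by simp
        finally show ?thesis using w q qne by (intro exI[of _ "A # q"]) auto
      qed
    qed
  qed
  have walk_lb: "\<rho> (last p - hd p) \<le> s * (length p - 1)" if "is_walk V adj p" for p
    using that
  proof (induction p)
    case Nil then show ?case by (simp add: is_walk_def)
  next
    case (Cons a q)
    show ?case
    proof (cases "q = []")
      case True then show ?thesis by (simp add: rho0)
    next
      case False
      have h: "a \<in> V" "adj a (hd q)" "is_walk V adj q" using Cons.prems is_walk_Cons[OF False] by auto
      have hq: "hd q \<in> V" "last q \<in> V" using h(3) False unfolding is_walk_def by auto
      have "last (a # q) - hd (a # q) = (last q - hd q) + (hd q - a)" using False by simp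
      moreover have "\<rho> (hd q - a) = s" using h(2) adj_sym adj by metis
      moreover have "last q - hd q \<in> V" "hd q - a \<in> V" using hq h(1) Vdiff by auto
      ultimately have "\<rho> (last (a # q) - hd (a # q)) \<le> \<rho> (last q - hd q) + s" using sub by metis
      also have "\<dots> \<le> s * (length q - 1) + s" using Cons.IH h(3) by simp
      also have "\<dots> = s * (length (a # q) - 1)" using False by (cases q) auto
      finally show ?thesis .
    qed
  qed
  have geo_rank: "\<rho> (last p - hd p) = s * l" if g: "is_geodesic V adj l p" for l p
  proof -
    have w: "is_walk V adj p" and len: "length p = Suc l" and d: "graph_dist V adj (hd p) (last p) = l"
      using g unfolding is_geodesic_def by auto
    have hl: "hd p \<in> V" "last p \<in> V" using w unfolding is_walk_def by auto
    have le: "\<rho> (last p - hd p) \<le> s * l" using walk_lb[OF w] len by simp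
    obtain q where q: "is_walk V adj q" "hd q = hd p" "last q = hd p + (last p - hd p)"
      "s * (length q - 1) \<le> \<rho> (last p - hd p)"
      using walk_ex hl Vdiff by blast
    have qne: "q \<noteq> []" using q(1) unfolding is_walk_def by auto
    have "l \<le> length q - 1" unfolding d[symmetric] graph_dist_def
      apply (rule Least_le)
      using q qne by (intro exI[of _ q]) auto
    then have "s * l \<le> s * (length q - 1)" by simp
    then show ?thesis using le q(4) by linarith
  qed
  show ?thesis unfolding geodesic_transitive_def
  proof (intro allI impI)
    fix l p p' assume gg: "is_geodesic V adj l p \<and> is_geodesic V adj l p'"
    then have g: "is_geodesic V adj l p" and g': "is_geodesic V adj l p'" by auto
    have w: "is_walk V adj p" and len: "length p = Suc l" using g unfolding is_geodesic_def by auto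
    have w': "is_walk V adj p'" and len': "length p' = Suc l" using g' unfolding is_geodesic_def by auto
    define d where "d j = p ! Suc j - p ! j" for j
    define d' where "d' j = p' ! Suc j - p' ! j" for j
    have dV: "\<forall>j<l. d j \<in> V \<and> \<rho> (d j) = s"
    proof (intro allI impI conjI)
      fix j assume j: "j < l"
      have "adj (p ! j) (p ! Suc j)" using w j len unfolding is_walk_def by auto
      then show "\<rho> (d j) = s" unfolding d_def using adj_sym adj by metis
      show "d j \<in> V" using w j len Vdiff unfolding is_walk_def d_def
        by (metis Suc_lessD Suc_mono nth_mem subsetD)
    qed
    have dV': "\<forall>j<l. d' j \<in> V \<and> \<rho> (d' j) = s"
    proof (intro allI impI conjI)
      fix j assume j: "j < l"
      have "adj (p' ! j) (p' ! Suc j)" using w' j len' unfolding is_walk_def by auto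
      then show "\<rho> (d' j) = s" unfolding d'_def using adj_sym adj by metis
      show "d' j \<in> V" using w' j len' Vdiff unfolding is_walk_def d'_def
        by (metis Suc_lessD Suc_mono nth_mem subsetD)
    qed
    have tel: "p ! i - p ! 0 = (\<Sum>j<i. d j)" if "i < length p" for i
      using telescope[OF that] by (simp add: d_def)
    have tel': "p' ! i - p' ! 0 = (\<Sum>j<i. d' j)" if "i < length p'" for i
      using telescope[OF that] by (simp add: d'_def)
    have pne: "p \<noteq> []" "p' \<noteq> []" using len len' by auto
    have "last p - hd p = (\<Sum>j<l. d j)" using tel[of l] len pne by (simp add: last_conv_nth hd_conv_nth)
    then have s1: "\<rho> (\<Sum>j<l. d j) = s * l" using geo_rank[OF g] by simp
    have "last p' - hd p' = (\<Sum>j<l. d' j)" using tel'[of l] len' pne by (simp add: last_conv_nth hd_conv_nth)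
    then have s2: "\<rho> (\<Sum>j<l. d' j) = s * l" using geo_rank[OF g'] by simp
    obtain L where Ladd: "\<And>X Y. L (X + Y) = L X + L Y" and Lbij: "bij_betw L V V"
      and Lrho: "\<forall>Y\<in>V. \<rho> (L Y) = s \<longleftrightarrow> \<rho> Y = s" and Ld: "\<forall>j<l. L (d j) = d' j"
      using ext[OF dV dV' s1 s2] by blast
    have L0: "L 0 = 0" using Ladd[of 0 0] by simp
    have Lneg: "L (- X) = - L X" for X using Ladd[of X "-X"] L0 by (simp add: eq_neg_iff_add_eq_0 add.commute)
    have Ldiff: "L (X - Y) = L X - L Y" for X Y using Ladd[of X "-Y"] Lneg[of Y] by simp
    have Lsum: "L (\<Sum>j\<in>I. f j) = (\<Sum>j\<in>I. L (f j))" for I and f :: "nat \<Rightarrow> 'v"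
      by (induction I rule: infinite_finite_induct) (auto simp: L0 Ladd)
    define f where "f X = L (X - hd p) + hd p'" for X
    have h0: "hd p \<in> V" "hd p' \<in> V" using w w' unfolding is_walk_def by auto
    have fbij: "bij_betw f V V"
    proof -
      have b1: "bij_betw (\<lambda>X. X - hd p) V V"
        by (rule bij_betw_byWitness[where f'="\<lambda>X. X + hd p"]) (auto intro: Vdiff Vadd h0)
      have b2: "bij_betw (\<lambda>X. X + hd p') V V"
        by (rule bij_betw_byWitness[where f'="\<lambda>X. X - hd p'"]) (auto intro: Vdiff Vadd h0)
      show ?thesis using bij_betw_trans[OF bij_betw_trans[OF b1 Lbij] b2] unfolding f_def[abs_def] by (simp add: o_def)
    qed
    have fadj: "\<forall>x\<in>V. \<forall>y\<in>V. adj (f x) (f y) \<longleftrightarrow> adj x y"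
    proof (intro ballI)
      fix x y assume "x \<in> V" "y \<in> V"
      then have "x - y \<in> V" using Vdiff by auto
      moreover have "f x - f y = L (x - y)" by (simp add: f_def Ldiff[symmetric])
      ultimately show "adj (f x) (f y) \<longleftrightarrow> adj x y" using Lrho by (simp add: adj)
    qed
    have "map f p = p'"
    proof (rule nth_equalityI)
      show "length (map f p) = length p'" using len len' by simp
      fix i assume "i < length (map f p)"
      then have i: "i < Suc l" using len by simp
      have "f (p ! i) = L (\<Sum>j<i. d j) + p' ! 0"
        using tel[of i] i len pne by (simp add: f_def hd_conv_nth)
      also have "\<dots> = (\<Sum>j<i. d' j) + p' ! 0" using Lsum Ld i by simp
      also have "\<dots> = p' ! i" using tel'[of i] i len' by (metis diff_add_cancel)
      finally show "map f p ! i = p' ! i" using i len by simp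
    qed
    then show "\<exists>f. graph_automorphism V adj f \<and> map f p = p'"
      using fbij fadj unfolding graph_automorphism_def by blast
  qed
qed

definition outer :: "'a::field^'m \<Rightarrow> 'a^'k \<Rightarrow> 'a^'k^'m" where
  "outer u v = (\<chi> i j. u$i * v$j)"

definition dotv :: "'a::field^'n \<Rightarrow> 'a^'n \<Rightarrow> 'a" where
  "dotv y z = (\<Sum>i\<in>UNIV. y$i * z$i)"

lemma outer_nth[simp]: "outer u v $ i $ j = u$i * v$j"
  by (simp add: outer_def)

lemma row_eq: "row i X = X $ i"
  by (simp add: row_def vec_eq_iff)

lemma rows_eq: "rows X = range (\<lambda>i. X $ i)"
  by (auto simp: rows_def row_eq)

lemma rank_eq_dim: "rank X = vec.dim (range (\<lambda>i. X $ i))"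
  by (simp add: row_rank_def_gen rows_eq)

lemma rank_zero_iff: "rank (X::'a::field^'k^'m) = 0 \<longleftrightarrow> X = 0"
proof -
  have "rank X = 0 \<longleftrightarrow> (\<forall>i. X $ i = 0)" by (auto simp: rank_eq_dim)
  also have "\<dots> \<longleftrightarrow> X = 0" by (simp add: vec_eq_iff[of X 0])
  finally show ?thesis .
qed

lemma outer_row: "outer u v $ i = u$i *s v"
  by (simp add: vec_eq_iff)

lemma rank_le_span:
  fixes X :: "'a::field^'k^'m" and Y :: "'a^'k^'p"
  assumes "\<And>i. Y $ i \<in> vec.span (range (\<lambda>i. X $ i))"
  shows "rank Y \<le> rank X"
  unfolding rank_eq_dim using assms by (intro vec.subset_le_dim) auto

lemma rank_le_card:
  fixes X :: "'a::field^'k^'m"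
  assumes "\<And>i. X $ i \<in> vec.span S" "finite S"
  shows "rank X \<le> card S"
  unfolding rank_eq_dim using assms by (intro vec.dim_le_card) auto

lemma rank_neg: "rank (- X) = rank (X::'a::field^'k^'m)"
proof -
  have "rank (- Y) \<le> rank Y" for Y :: "'a^'k^'m"
    by (rule rank_le_span) (metis rangeI vec.span_base vec.span_neg vector_uminus_component vec_eq_iff)
  from this[of X] this[of "-X"] show ?thesis by simp
qed

lemma rank_add: "rank (A + B) \<le> rank A + rank (B::'a::field^'k^'m)"
proof -
  obtain BA where BA: "BA \<subseteq> range (\<lambda>i. A $ i)" "vec.independent BA"
    "range (\<lambda>i. A $ i) \<subseteq> vec.span BA" "card BA = vec.dim (range (\<lambda>i. A $ i))"
    using vec.basis_exists by blast
  obtain BB where BB: "BB \<subseteq> range (\<lambda>i. B $ i)" "vec.independent BB"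
    "range (\<lambda>i. B $ i) \<subseteq> vec.span BB" "card BB = vec.dim (range (\<lambda>i. B $ i))"
    using vec.basis_exists by blast
  have fin: "finite BA" "finite BB" using vec.finiteI_independent[OF BA(2)] vec.finiteI_independent[OF BB(2)] by auto
  have "rank (A + B) \<le> card (BA \<union> BB)"
  proof (rule rank_le_card)
    fix i
    have "A $ i \<in> vec.span (BA \<union> BB)" "B $ i \<in> vec.span (BA \<union> BB)"
      using BA(3) BB(3) vec.span_mono[of BA "BA \<union> BB"] vec.span_mono[of BB "BA \<union> BB"] by auto
    then show "(A + B) $ i \<in> vec.span (BA \<union> BB)" by (simp add: vec.span_add)
  qed (use fin in auto)
  also have "\<dots> \<le> card BA + card BB" by (rule card_Un_le)
  finally show ?thesis using BA(4) BB(4) by (simp add: rank_eq_dim)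
qed

lemma rank_outer_le: "rank (outer u v) \<le> 1"
proof -
  have "rank (outer u v) \<le> card {v}"
  proof (rule rank_le_card)
    fix i show "outer u v $ i \<in> vec.span {v}" unfolding outer_row
      by (rule vec.span_scale) (simp add: vec.span_base)
  qed simp
  then show ?thesis by simp
qed

lemma outer_eq_0: "outer u v = 0 \<longleftrightarrow> u = 0 \<or> v = 0"
  by (auto simp: vec_eq_iff)

lemma rank_outer: "u \<noteq> 0 \<Longrightarrow> v \<noteq> 0 \<Longrightarrow> rank (outer u v) = 1"
  using rank_outer_le[of u v] rank_zero_iff[of "outer u v"] outer_eq_0[of u v] by linarith

lemma dotv_add: "dotv (x + y) z = dotv x z + dotv y z"
  by (simp add: dotv_def distrib_right sum.distrib)
lemma dotv_scale: "dotv (c *s x) z = c * dotv x z"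
  by (simp add: dotv_def sum_distrib_left mult.assoc)
lemma dotv_zero[simp]: "dotv 0 z = 0"
  by (simp add: dotv_def)
lemma mv_dotv: "(A *v z) $ i = dotv (A $ i) z"
  by (simp add: matrix_vector_mult_def dotv_def)

lemma dotv_span_zero:
  assumes "\<And>b. b \<in> S \<Longrightarrow> dotv b z = 0" "x \<in> vec.span S"
  shows "dotv x z = 0"
  using assms(2)
proof (induction rule: vec.span_induct_alt)
  case base then show ?case by simp
next
  case (step c x y) then show ?case using assms(1) by (simp add: dotv_add dotv_scale)
qed

lemma drop_basis:
  fixes Y :: "'a::field^'k^'m"
  assumes kill: "\<And>z. z \<in> Z \<Longrightarrow> Y *v z = 0"
  obtains B where "B \<subseteq> range (\<lambda>i. Y $ i)" "vec.independent B" "card B = rank Y"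
    "\<And>b z. b \<in> vec.span B \<Longrightarrow> z \<in> Z \<Longrightarrow> dotv b z = 0"
proof -
  obtain B where B: "B \<subseteq> range (\<lambda>i. Y $ i)" "vec.independent B"
    "range (\<lambda>i. Y $ i) \<subseteq> vec.span B" "card B = vec.dim (range (\<lambda>i. Y $ i))"
    using vec.basis_exists by blast
  have "dotv b z = 0" if "b \<in> vec.span B" "z \<in> Z" for b z
  proof (rule dotv_span_zero[OF _ that(1)])
    fix b assume "b \<in> B"
    then obtain i where "b = Y $ i" using B(1) by auto
    then show "dotv b z = 0" using kill[OF that(2)] mv_dotv[of Y z i] by simp
  qed
  then show ?thesis using that B by (simp add: rank_eq_dim)
qed

lemma drop1:
  fixes X Y :: "'a::field^'k^'m"
  assumes rowsY: "\<And>i. Y $ i \<in> vec.span (range (\<lambda>i. X $ i))"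
    and kill: "Y *v z = 0"
    and y: "y \<in> vec.span (range (\<lambda>i. X $ i))" and c: "dotv y z \<noteq> 0"
  shows "rank Y + 1 \<le> rank X"
proof -
  obtain B where B: "B \<subseteq> range (\<lambda>i. Y $ i)" "vec.independent B" "card B = rank Y"
    "\<And>b z'. b \<in> vec.span B \<Longrightarrow> z' \<in> {z} \<Longrightarrow> dotv b z' = 0"
    by (rule drop_basis[of "{z}" Y]) (use kill in auto)
  have yB: "y \<notin> vec.span B" using B(4)[of y z] c by auto
  then have yB': "y \<notin> B" using vec.span_base by blast
  have ind: "vec.independent (insert y B)" using vec.independent_insertI[OF yB B(2)] .
  have sub: "insert y B \<subseteq> vec.span (range (\<lambda>i. X $ i))" using y B(1) rowsY by auto
  have fin: "finite B" using vec.finiteI_independent[OF B(2)] .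
  have "card (insert y B) \<le> vec.dim (vec.span (range (\<lambda>i. X $ i)))"
    by (rule vec.independent_card_le_dim[OF sub ind])
  moreover have "card (insert y B) = card B + 1" using fin yB' by simp
  moreover have "vec.dim (vec.span (range (\<lambda>i. X $ i))) = rank X"
    by (simp only: vec.dim_span rank_eq_dim)
  ultimately show ?thesis using B(3) by simp
qed

lemma drop2:
  fixes X Y :: "'a::field^'k^'m"
  assumes rowsY: "\<And>i. Y $ i \<in> vec.span (range (\<lambda>i. X $ i))"
    and kill1: "Y *v z1 = 0" and kill2: "Y *v z2 = 0"
    and y1: "y1 \<in> vec.span (range (\<lambda>i. X $ i))" and y2: "y2 \<in> vec.span (range (\<lambda>i. X $ i))"
    and c1: "dotv y2 z1 \<noteq> 0" and c2: "dotv y2 z2 = 0" and c3: "dotv y1 z2 \<noteq> 0"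
  shows "rank Y + 2 \<le> rank X"
proof -
  obtain B where B: "B \<subseteq> range (\<lambda>i. Y $ i)" "vec.independent B" "card B = rank Y"
    "\<And>b z. b \<in> vec.span B \<Longrightarrow> z \<in> {z1, z2} \<Longrightarrow> dotv b z = 0"
    by (rule drop_basis[of "{z1, z2}" Y]) (use kill1 kill2 in auto)
  have yB: "y2 \<notin> vec.span B" using B(4)[of y2 z1] c1 by auto
  then have yB': "y2 \<notin> B" using vec.span_base by blast
  have ind: "vec.independent (insert y2 B)" using vec.independent_insertI[OF yB B(2)] .
  have y1B: "y1 \<notin> vec.span (insert y2 B)"
  proof
    assume "y1 \<in> vec.span (insert y2 B)"
    then obtain k where k: "y1 - k *s y2 \<in> vec.span B" using vec.span_insert by blast
    have "dotv (y1 - k *s y2) z2 = 0" using B(4)[OF k, of z2] by simp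
    moreover have "dotv (y1 - k *s y2) z2 = dotv y1 z2 - k * dotv y2 z2"
      using dotv_add[of y1 "- (k *s y2)" z2] dotv_scale[of "-k" y2 z2] by simp
    ultimately show False using c2 c3 by simp
  qed
  then have y1B': "y1 \<notin> insert y2 B" using vec.span_base by blast
  have ind2: "vec.independent (insert y1 (insert y2 B))" using vec.independent_insertI[OF y1B ind] .
  have sub: "insert y1 (insert y2 B) \<subseteq> vec.span (range (\<lambda>i. X $ i))" using y1 y2 B(1) rowsY by auto
  have fin: "finite B" using vec.finiteI_independent[OF B(2)] .
  have "card (insert y1 (insert y2 B)) \<le> vec.dim (vec.span (range (\<lambda>i. X $ i)))"
    by (rule vec.independent_card_le_dim[OF sub ind2])
  moreover have "card (insert y1 (insert y2 B)) = card B + 2" using fin yB' y1B' by simp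
  moreover have "vec.dim (vec.span (range (\<lambda>i. X $ i))) = rank X"
    by (simp only: vec.dim_span rank_eq_dim)
  ultimately show ?thesis using B(3) by simp
qed


lemma span_image_repr:
  fixes f :: "'i \<Rightarrow> 'a::field^'n"
  assumes "finite I" "x \<in> vec.span (f ` I)"
  shows "\<exists>c. x = (\<Sum>j\<in>I. c j *s f j)"
  using assms(2)
proof (induction rule: vec.span_induct_alt)
  case base
  show ?case by (rule exI[of _ "\<lambda>_. 0"]) simp
next
  case (step a x y)
  obtain c where c: "y = (\<Sum>j\<in>I. c j *s f j)" using step by blast
  obtain j0 where j0: "j0 \<in> I" "x = f j0" using step by blast
  have "(\<Sum>j\<in>I. (c j + (if j = j0 then a else 0)) *s f j)
      = (\<Sum>j\<in>I. c j *s f j) + (\<Sum>j\<in>I. (if j = j0 then a else 0) *s f j)"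
    by (simp add: vector_sadd_rdistrib sum.distrib)
  also have "(\<Sum>j\<in>I. (if j = j0 then a else 0) *s f j) = a *s f j0"
    using j0(1) assms(1) by (simp add: if_distrib[of "\<lambda>t. t *s _"] sum.delta' cong: if_cong)
  finally show ?case using c j0 by (intro exI[of _ "\<lambda>j. c j + (if j = j0 then a else 0)"]) (simp add: add.commute)
qed

lemma rank_indep:
  fixes X :: "'a::field^'k^'m" and b :: "'i \<Rightarrow> 'a^'k"
  assumes rows: "\<And>i. X $ i \<in> vec.span (b ` I)" and fin: "finite I" and r: "rank X = card I"
  shows "inj_on b I \<and> vec.independent (b ` I)"
proof -
  have a1: "rank X \<le> vec.dim (b ` I)" unfolding rank_eq_dim
    using rows by (intro vec.subset_le_dim) auto
  have a2: "vec.dim (b ` I) \<le> card (b ` I)" by (rule vec.dim_le_card) (auto intro: vec.span_base fin)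
  have a3: "card (b ` I) \<le> card I" by (rule card_image_le[OF fin])
  have eq1: "card (b ` I) = card I" and eq2: "vec.dim (b ` I) = card (b ` I)"
    using r a1 a2 a3 by linarith+
  have "inj_on b I" using eq1 fin by (simp add: eq_card_imp_inj_on)
  moreover have "vec.independent (b ` I)"
    using vec.card_eq_dim[of "b ` I" "b ` I"] eq2 fin by (auto intro: vec.span_base)
  ultimately show ?thesis ..
qed

lemma exists_invertible:
  fixes b b' :: "'i \<Rightarrow> 'a::field^'n"
  assumes fin: "finite I" and ib: "inj_on b I" and indb: "vec.independent (b ` I)"
    and ib': "inj_on b' I" and indb': "vec.independent (b' ` I)"
  shows "\<exists>P P'. P' ** P = mat 1 \<and> P ** P' = mat 1 \<and> (\<forall>j\<in>I. P *v b j = b' j)"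
proof -
  define f where "f = b' \<circ> the_inv_into I b"
  have fb: "f (b j) = b' j" if "j \<in> I" for j
    using that ib by (simp add: f_def the_inv_into_f_f)
  have fimg: "f ` (b ` I) = b' ` I" using fb by (auto simp: image_image cong: image_cong)
  have finj: "inj_on f (b ` I)"
  proof (rule inj_onI)
    fix x y assume "x \<in> b ` I" "y \<in> b ` I" "f x = f y"
    then obtain i j where "i \<in> I" "j \<in> I" "x = b i" "y = b j" "b' i = b' j" using fb by auto
    then show "x = y" using ib' by (metis inj_onD)
  qed
  obtain g where g: "Vector_Spaces.linear (*s) (*s) g" "inj g" "\<forall>x\<in>b ` I. g x = f x"
    using vec.linear_independent_extend_inj[OF indb] fimg indb' finj by metis
  have sg: "surj g" using vec.linear_inj_imp_surj[OF g(1) g(2)] .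
  define h where "h = inv g"
  have lh: "Vector_Spaces.linear (*s) (*s) h" unfolding h_def using vec.inj_linear_imp_inv_linear[OF g(1) g(2)] .
  have hg: "h (g x) = x" for x unfolding h_def using g(2) by simp
  have gh: "g (h x) = x" for x unfolding h_def using sg by (simp add: surj_f_inv_f)
  define P where "P = matrix g"
  define P' where "P' = matrix h"
  have Pv: "P *v x = g x" for x unfolding P_def using matrix_works[OF g(1)] .
  have P'v: "P' *v x = h x" for x unfolding P'_def using matrix_works[OF lh] .
  have "P' ** P = mat 1" by (simp add: matrix_eq matrix_vector_mul_assoc[symmetric] Pv P'v hg)
  moreover have "P ** P' = mat 1" by (simp add: matrix_eq matrix_vector_mul_assoc[symmetric] Pv P'v gh)
  moreover have "\<forall>j\<in>I. P *v b j = b' j" using Pv g(3) fb by simp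
  ultimately show ?thesis by blast
qed

lemma matrix_add_rdistrib': "((A + B) ** C) = (A ** C) + (B ** (C::'a::field^_^_))"
  by (simp add: matrix_matrix_mult_def vec_eq_iff distrib_right sum.distrib)

lemma dotv_axis: "dotv y (axis j 1) = y $ j"
  by (simp add: dotv_def axis_def if_distrib cong: if_cong)

lemma mv_axis: "((A::'a::field^'n^'m) *v axis j 1) $ p = A $ p $ j"
  by (simp add: mv_dotv dotv_axis)

lemma outer_sum_left: "outer (\<Sum>j\<in>J. g j) v = (\<Sum>j\<in>J. outer (g j) v)"
  by (simp add: vec_eq_iff sum_distrib_right)

lemma outer_scale_left: "outer (c *s u) v = outer u (c *s v)"
  by (simp add: vec_eq_iff mult_ac)

lemma outer_add_right: "outer u (v + w) = outer u v + outer u w"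
  by (simp add: vec_eq_iff distrib_left)

lemma rank_sum_le: "rank (\<Sum>j\<in>J. f j :: 'a::field^'k^'m) \<le> (\<Sum>j\<in>J. rank (f j))"
proof (induction J rule: infinite_finite_induct)
  case (insert x F)
  then show ?case using rank_add[of "f x" "sum f F"] by simp
qed (simp_all add: rank_zero_iff)

lemma outer_mult: "P ** outer u v ** transpose Q = outer (P *v u) (Q *v v)"
  apply (simp add: vec_eq_iff matrix_matrix_mult_def matrix_vector_mult_def transpose_def
      sum_distrib_left sum_distrib_right mult_ac)
  apply (intro allI)
  apply (rule sum.swap)
  done

lemma bil_red:
  fixes X :: "'a::field^'k^'m"
  assumes "X \<noteq> 0"
  shows "\<exists>u v. u \<noteq> 0 \<and> v \<noteq> 0 \<and> rank (X - outer u v) + 1 \<le> rank X"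
proof -
  obtain i j where a: "X $ i $ j \<noteq> 0" using assms by (metis vec_eq_iff zero_index)
  define a where "a = X $ i $ j"
  define u where "u = (\<chi> p. X $ p $ j * inverse a)"
  define v where "v = X $ i"
  have u0: "u \<noteq> 0" using a by (auto simp: vec_eq_iff u_def a_def intro!: exI[of _ i])
  have v0: "v \<noteq> 0" using a by (auto simp: vec_eq_iff v_def intro!: exI[of _ j])
  have "rank (X - outer u v) + 1 \<le> rank X"
  proof (rule drop1[where z = "axis j 1" and y = "X $ i"])
    fix p
    have "(X - outer u v) $ p = X $ p - (u $ p) *s X $ i" by (simp add: vec_eq_iff v_def)
    then show "(X - outer u v) $ p \<in> vec.span (range (\<lambda>i. X $ i))"
      by (simp add: vec.span_diff vec.span_scale vec.span_base)
  next
    show "(X - outer u v) *v axis j 1 = 0"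
      using a by (simp add: vec_eq_iff mv_axis u_def v_def a_def)
  next
    show "X $ i \<in> vec.span (range (\<lambda>i. X $ i))" by (simp add: vec.span_base)
  next
    show "dotv (X $ i) (axis j 1) \<noteq> 0" using a by (simp add: dotv_axis)
  qed
  then show ?thesis using u0 v0 by blast
qed

lemma bil_rank1:
  fixes X :: "'a::field^'k^'m"
  assumes "rank X = 1"
  shows "\<exists>u v. u \<noteq> 0 \<and> v \<noteq> 0 \<and> X = outer u v"
proof -
  have "X \<noteq> 0" using assms by (metis rank_zero_iff zero_neq_one)
  then obtain u v where "u \<noteq> 0" "v \<noteq> 0" "rank (X - outer u v) + 1 \<le> rank X" using bil_red by blast
  then show ?thesis using assms rank_zero_iff[of "X - outer u v"] by auto
qed

lemma rank1_mult':
  fixes Y :: "'a::field^'k^'m" and P :: "'a^'m^'m" and Q :: "'a^'k^'k"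
  assumes P: "P' ** P = mat 1" and Q: "Q' ** Q = mat 1" and Y: "rank Y = 1"
  shows "rank (P ** Y ** transpose Q) = 1"
proof -
  obtain u v where uv: "u \<noteq> 0" "v \<noteq> 0" "Y = outer u v" using bil_rank1[OF Y] by blast
  have "P *v u \<noteq> 0"
  proof
    assume "P *v u = 0"
    then have "P' *v (P *v u) = 0" by simp
    then show False using P uv(1) by (simp add: matrix_vector_mul_assoc)
  qed
  moreover have "Q *v v \<noteq> 0"
  proof
    assume "Q *v v = 0"
    then have "Q' *v (Q *v v) = 0" by simp
    then show False using Q uv(2) by (simp add: matrix_vector_mul_assoc)
  qed
  ultimately show ?thesis using uv(3) by (simp add: outer_mult rank_outer)
qed


lemma exists_dep:
  fixes u :: "'i \<Rightarrow> 'a::field^'n"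
  assumes "\<not> (inj_on u I \<and> vec.independent (u ` I))"
  shows "\<exists>m\<in>I. u m \<in> vec.span (u ` (I - {m}))"
proof (cases "inj_on u I")
  case False
  then obtain m m' where mm: "m \<in> I" "m' \<in> I" "m \<noteq> m'" "u m = u m'" unfolding inj_on_def by blast
  then have "u m \<in> u ` (I - {m})" by (intro image_eqI[of _ _ m']) auto
  then have "u m \<in> vec.span (u ` (I - {m}))" by (rule vec.span_base)
  then show ?thesis using mm(1) by blast
next
  case True
  then have "vec.dependent (u ` I)" using assms by blast
  then obtain a where a: "a \<in> u ` I" "a \<in> vec.span (u ` I - {a})" unfolding vec.dependent_def by blast
  then obtain m where m: "m \<in> I" "a = u m" by blast
  have "u ` I - {u m} = u ` (I - {m})" using True m(1) by (auto simp: inj_on_def)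
  then have "u m \<in> vec.span (u ` (I - {m}))" using a(2) m(2) by simp
  then show ?thesis using m(1) by blast
qed

lemma bil_indep_left:
  fixes u :: "nat \<Rightarrow> 'a::field^'m" and v :: "nat \<Rightarrow> 'a^'k"
  assumes fin: "finite I" and r: "rank (\<Sum>j\<in>I. outer (u j) (v j)) = card I"
  shows "inj_on u I \<and> vec.independent (u ` I)"
proof (rule ccontr)
  assume "\<not> (inj_on u I \<and> vec.independent (u ` I))"
  then obtain m where m: "m \<in> I" "u m \<in> vec.span (u ` (I - {m}))" using exists_dep by blast
  obtain c where c: "u m = (\<Sum>j\<in>I - {m}. c j *s u j)" using span_image_repr[OF _ m(2)] fin by blast
  have "(\<Sum>j\<in>I. outer (u j) (v j)) = outer (u m) (v m) + (\<Sum>j\<in>I - {m}. outer (u j) (v j))"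
    using sum.remove[OF fin m(1)] by simp
  also have "outer (u m) (v m) = (\<Sum>j\<in>I - {m}. outer (u j) (c j *s v m))"
    unfolding c outer_sum_left outer_scale_left ..
  finally have eq: "(\<Sum>j\<in>I. outer (u j) (v j)) = (\<Sum>j\<in>I - {m}. outer (u j) (v j + c j *s v m))"
    by (simp add: outer_add_right sum.distrib add.commute)
  have "rank (\<Sum>j\<in>I. outer (u j) (v j)) \<le> (\<Sum>j\<in>I - {m}. rank (outer (u j) (v j + c j *s v m)))"
    unfolding eq by (rule rank_sum_le)
  also have "\<dots> \<le> (\<Sum>j\<in>I - {m}. 1)" by (rule sum_mono) (rule rank_outer_le)
  also have "\<dots> = card I - 1" using fin m(1) by simp
  finally have "rank (\<Sum>j\<in>I. outer (u j) (v j)) \<le> card I - 1" .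
  moreover have "card I > 0" using fin m(1) by (auto simp: card_gt_0_iff)
  ultimately show False using r by linarith
qed

lemma bil_indep_right:
  fixes u :: "nat \<Rightarrow> 'a::field^'m" and v :: "nat \<Rightarrow> 'a^'k"
  assumes fin: "finite I" and r: "rank (\<Sum>j\<in>I. outer (u j) (v j)) = card I"
  shows "inj_on v I \<and> vec.independent (v ` I)"
proof (rule rank_indep[OF _ fin r])
  fix p
  have "(\<Sum>j\<in>I. outer (u j) (v j)) $ p = (\<Sum>j\<in>I. u j $ p *s v j)"
    by (simp add: vec_eq_iff)
  then show "(\<Sum>j\<in>I. outer (u j) (v j)) $ p \<in> vec.span (v ` I)"
    by (simp add: vec.span_sum vec.span_scale vec.span_base)
qed

lemma choice2:
  assumes "\<And>j. j < l \<Longrightarrow> \<exists>a b. R j a b"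
  shows "\<exists>f g. \<forall>j<l. R j (f j) (g j)"
proof -
  have "R j (SOME a. \<exists>b. R j a b) (SOME b. R j (SOME a. \<exists>b. R j a b) b)" if "j < l" for j
  proof -
    have "\<exists>b. R j (SOME a. \<exists>b. R j a b) b" using assms[OF that] by (rule someI_ex)
    then show ?thesis by (rule someI_ex)
  qed
  then show ?thesis
    by (intro exI[of _ "\<lambda>j. SOME a. \<exists>b. R j a b"] exI[of _ "\<lambda>j. SOME b. R j (SOME a. \<exists>b. R j a b) b"]) auto
qed

lemma bil_ext:
  fixes d d' :: "nat \<Rightarrow> 'a::field^'k^'m"
  assumes d: "\<forall>j<l. d j \<in> UNIV \<and> rank (d j) = 1" and d': "\<forall>j<l. d' j \<in> UNIV \<and> rank (d' j) = 1"
    and s: "rank (sum d {..<l}) = 1 * l" and s': "rank (sum d' {..<l}) = 1 * l"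
  shows "\<exists>L. (\<forall>X Y. L (X + Y) = L X + L Y) \<and> bij_betw L UNIV UNIV \<and>
              (\<forall>Y\<in>UNIV. rank (L Y) = 1 \<longleftrightarrow> rank Y = 1) \<and> (\<forall>j<l. L (d j) = d' j)"
proof -
  have "\<exists>u v. \<forall>j<l. u j \<noteq> 0 \<and> v j \<noteq> 0 \<and> d j = outer (u j) (v j)"
    by (rule choice2) (use d bil_rank1 in blast)
  then obtain u v where uv: "\<And>j. j < l \<Longrightarrow> u j \<noteq> 0 \<and> v j \<noteq> 0 \<and> d j = outer (u j) (v j)" by blast
  have "\<exists>u v. \<forall>j<l. u j \<noteq> 0 \<and> v j \<noteq> 0 \<and> d' j = outer (u j) (v j)"
    by (rule choice2) (use d' bil_rank1 in blast)
  then obtain u' v' where uv': "\<And>j. j < l \<Longrightarrow> u' j \<noteq> 0 \<and> v' j \<noteq> 0 \<and> d' j = outer (u' j) (v' j)" by blast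
  have sd: "sum d {..<l} = (\<Sum>j<l. outer (u j) (v j))"
    by (rule sum.cong) (simp_all add: uv)
  have sd': "sum d' {..<l} = (\<Sum>j<l. outer (u' j) (v' j))"
    by (rule sum.cong) (simp_all add: uv')
  have r: "rank (\<Sum>j<l. outer (u j) (v j)) = card {..<l}" using s sd by simp
  have r': "rank (\<Sum>j<l. outer (u' j) (v' j)) = card {..<l}" using s' sd' by simp
  obtain P P' where P: "P' ** P = mat 1" "P ** P' = mat 1" "\<forall>j\<in>{..<l}. P *v u j = u' j"
  proof -
    have a: "inj_on u {..<l} \<and> vec.independent (u ` {..<l})" by (rule bil_indep_left[OF _ r]) simp
    have b: "inj_on u' {..<l} \<and> vec.independent (u' ` {..<l})" by (rule bil_indep_left[OF _ r']) simp
    show ?thesis using exists_invertible[of "{..<l}" u u'] a b that by blast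
  qed
  obtain Q Q' where Q: "Q' ** Q = mat 1" "Q ** Q' = mat 1" "\<forall>j\<in>{..<l}. Q *v v j = v' j"
  proof -
    have a: "inj_on v {..<l} \<and> vec.independent (v ` {..<l})" by (rule bil_indep_right[OF _ r]) simp
    have b: "inj_on v' {..<l} \<and> vec.independent (v' ` {..<l})" by (rule bil_indep_right[OF _ r']) simp
    show ?thesis using exists_invertible[of "{..<l}" v v'] a b that by blast
  qed
  define L where "L X = P ** X ** transpose Q" for X :: "'a^'k^'m"
  define L' where "L' X = P' ** X ** transpose Q'" for X :: "'a^'k^'m"
  have tQ: "transpose Q ** transpose Q' = mat 1" "transpose Q' ** transpose Q = mat 1"
    using Q by (simp_all add: matrix_transpose_mul[symmetric])
  have LL': "L' (L X) = X" "L (L' X) = X" for X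
  proof -
    have "L' (L X) = (P' ** P) ** X ** (transpose Q ** transpose Q')"
      unfolding L_def L'_def by (simp add: matrix_mul_assoc)
    then show "L' (L X) = X" using P tQ by simp
    have "L (L' X) = (P ** P') ** X ** (transpose Q' ** transpose Q)"
      unfolding L_def L'_def by (simp add: matrix_mul_assoc)
    then show "L (L' X) = X" using P tQ by simp
  qed
  show ?thesis
  proof (intro exI[of _ L] conjI allI ballI impI)
    show "L (X + Y) = L X + L Y" for X Y
      by (simp add: L_def matrix_add_ldistrib matrix_add_rdistrib')
    show "bij_betw L UNIV UNIV" by (rule bij_betw_byWitness[where f' = L']) (auto simp: LL')
    fix Y :: "'a^'k^'m"
    show "rank (L Y) = 1 \<longleftrightarrow> rank Y = 1"
    proof
      assume "rank (L Y) = 1"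
      then have "rank (L' (L Y)) = 1" unfolding L'_def using rank1_mult'[OF P(2) Q(2)] by blast
      then show "rank Y = 1" by (simp add: LL')
    next
      assume "rank Y = 1"
      then show "rank (L Y) = 1" unfolding L_def using rank1_mult'[OF P(1) Q(1)] by blast
    qed
  next
    fix j assume "j < l"
    then show "L (d j) = d' j" using uv[of j] uv'[of j] P(3) Q(3)
      by (simp add: L_def outer_mult)
  qed
qed

lemma bil_gt: "geodesic_transitive (UNIV :: ('a::field^'k^'m) set) bil_adj"
proof (rule gt_generic[where \<rho> = rank and s = 1])
  show "bil_adj X Y \<longleftrightarrow> rank (X - Y) = 1" for X Y :: "'a^'k^'m" by (simp add: bil_adj_def)
  show "rank (- X) = rank X" for X :: "'a^'k^'m" by (rule rank_neg)
  show "rank (0::'a^'k^'m) = 0" by (simp add: rank_zero_iff)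
  show "rank (X + D) \<le> rank X + 1" if "rank D = 1" for X D :: "'a^'k^'m"
    using rank_add[of X D] that by simp
  show "\<exists>D\<in>UNIV. rank D = 1 \<and> rank (X - D) + 1 \<le> rank X" if "X \<noteq> 0" for X :: "'a^'k^'m"
    using bil_red[OF that] rank_outer by blast
  show "\<exists>L. (\<forall>X Y. L (X + Y) = L X + L Y) \<and> bij_betw L UNIV UNIV \<and>
              (\<forall>Y\<in>UNIV. rank (L Y) = 1 \<longleftrightarrow> rank Y = 1) \<and> (\<forall>j<l. L (d j) = d' j)"
    if "\<forall>j<l. d j \<in> UNIV \<and> rank (d j) = 1" "\<forall>j<l. d' j \<in> UNIV \<and> rank (d' j) = 1"
      "rank (sum d {..<l}) = 1 * l" "rank (sum d' {..<l}) = 1 * l" for l and d d' :: "nat \<Rightarrow> 'a^'k^'m"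
    using bil_ext[OF that] .
qed auto

lemma vec_eqI: "(\<And>i. x $ i = y $ i) \<Longrightarrow> x = y"
  by (simp add: vec_eq_iff)

definition wedge :: "'a::field^'n \<Rightarrow> 'a^'n \<Rightarrow> 'a^'n^'n" where
  "wedge u v = outer u v - outer v u"

definition indep2 :: "'a::field^'n \<Rightarrow> 'a^'n \<Rightarrow> bool" where
  "indep2 u v \<longleftrightarrow> (\<forall>a b. a *s u + b *s v = 0 \<longrightarrow> a = 0 \<and> b = 0)"

lemma wedge_nth[simp]: "wedge u v $ p $ q = u$p * v$q - v$p * u$q"
  by (simp add: wedge_def)

lemma alt_iff: "X \<in> alt_verts \<longleftrightarrow> (\<forall>p q. X $ q $ p = - X $ p $ q) \<and> (\<forall>i. X $ i $ i = 0)"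
proof -
  have "transpose X = - X \<longleftrightarrow> (\<forall>p q. X $ q $ p = - X $ p $ q)"
    unfolding vec_eq_iff transpose_def by simp
  then show ?thesis unfolding alt_verts_def by blast
qed

lemma alt_skew: "X \<in> alt_verts \<Longrightarrow> X $ q $ p = - X $ p $ q"
  unfolding alt_iff by blast

lemma alt_diag: "X \<in> alt_verts \<Longrightarrow> X $ i $ i = 0"
  unfolding alt_iff by blast

lemma alt_0: "0 \<in> alt_verts"
  unfolding alt_iff by simp

lemma alt_add: "X \<in> alt_verts \<Longrightarrow> Y \<in> alt_verts \<Longrightarrow> X + Y \<in> alt_verts"
proof -
  assume X: "X \<in> alt_verts" and Y: "Y \<in> alt_verts"
  show ?thesis unfolding alt_iff
  proof (intro conjI allI)
    fix p q
    have "X $ q $ p = - X $ p $ q" "Y $ q $ p = - Y $ p $ q" using alt_skew[OF X] alt_skew[OF Y] by blast+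
    then show "(X + Y) $ q $ p = - (X + Y) $ p $ q" by simp
  next
    fix i show "(X + Y) $ i $ i = 0" using alt_diag[OF X, of i] alt_diag[OF Y, of i] by simp
  qed
qed

lemma alt_neg: "X \<in> alt_verts \<Longrightarrow> - X \<in> alt_verts"
proof -
  assume X: "X \<in> alt_verts"
  show ?thesis unfolding alt_iff
  proof (intro conjI allI)
    fix p q
    have "X $ q $ p = - X $ p $ q" by (rule alt_skew[OF X])
    then show "(- X) $ q $ p = - (- X) $ p $ q" by simp
  next
    fix i show "(- X) $ i $ i = 0" using alt_diag[OF X, of i] by simp
  qed
qed

lemma wedge_alt: "wedge u v \<in> alt_verts"
  unfolding alt_iff by (simp add: mult.commute)

lemma alt_red:
  fixes X :: "'a::field^'n^'n"
  assumes X: "X \<in> alt_verts" and X0: "X \<noteq> 0"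
  shows "\<exists>u v. indep2 u v \<and> rank (X - wedge u v) + 2 \<le> rank X"
proof -
  obtain i j where a: "X $ i $ j \<noteq> 0" using X0 by (metis vec_eq_iff zero_index)
  define a where "a = X $ i $ j"
  have a0: "a \<noteq> 0" using a by (simp add: a_def)
  have ji: "X $ j $ i = - a" using alt_skew[OF X, of j i] by (simp add: a_def)
  have ii: "X $ i $ i = 0" "X $ j $ j = 0" using alt_diag[OF X] by auto
  define u where "u = inverse a *s X $ i"
  define v where "v = X $ j"
  have ind: "indep2 u v" unfolding indep2_def
  proof (intro allI impI)
    fix c e assume h: "c *s u + e *s v = 0"
    have "(c *s u + e *s v) $ i = 0" "(c *s u + e *s v) $ j = 0" using h by simp_all
    then have "e * a = 0" "c = 0" using ii ji a0 by (simp_all add: u_def v_def a_def[symmetric])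
    then show "c = 0 \<and> e = 0" using a0 by simp
  qed
  have "rank (X - wedge u v) + 2 \<le> rank X"
  proof (rule drop2[where ?z1.0 = "axis i 1" and ?z2.0 = "axis j 1" and ?y1.0 = "X $ i" and ?y2.0 = "X $ j"])
    fix p
    have w: "wedge u v $ p = (u $ p) *s v - (v $ p) *s u" by (simp add: vec_eq_iff)
    have "u \<in> vec.span (range (\<lambda>i. X $ i))" "v \<in> vec.span (range (\<lambda>i. X $ i))"
      by (simp_all add: u_def v_def vec.span_scale vec.span_base)
    then have "wedge u v $ p \<in> vec.span (range (\<lambda>i. X $ i))"
      unfolding w by (simp add: vec.span_diff vec.span_scale)
    moreover have "X $ p \<in> vec.span (range (\<lambda>i. X $ i))" by (simp add: vec.span_base)
    ultimately show "(X - wedge u v) $ p \<in> vec.span (range (\<lambda>i. X $ i))"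
      by (simp add: vec.span_diff)
  next
    show "(X - wedge u v) *v axis i 1 = 0"
    proof (rule vec_eqI)
      fix p
      have "X $ i $ p = - X $ p $ i" by (rule alt_skew[OF X])
      then show "((X - wedge u v) *v axis i 1) $ p = 0 $ p"
        using ii ji a0 by (simp add: mv_axis u_def v_def a_def[symmetric])
    qed
  next
    show "(X - wedge u v) *v axis j 1 = 0"
    proof (rule vec_eqI)
      fix p
      have "X $ j $ p = - X $ p $ j" by (rule alt_skew[OF X])
      then show "((X - wedge u v) *v axis j 1) $ p = 0 $ p"
        using ii ji a0 by (simp add: mv_axis u_def v_def a_def[symmetric])
    qed
  qed (use ii ji a0 in \<open>simp_all add: dotv_axis vec.span_base a_def[symmetric]\<close>)
  then show ?thesis using ind by blast
qed

lemma indep2_ne: "indep2 u v \<Longrightarrow> u \<noteq> 0"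
  unfolding indep2_def by (metis add.right_neutral one_neq_zero vector_smult_lzero vector_smult_rzero)

lemma wedge_ne0:
  assumes "indep2 u v"
  shows "wedge u v \<noteq> 0"
proof
  assume W: "wedge u v = 0"
  have "u \<noteq> 0" using indep2_ne[OF assms] .
  then obtain k where k: "u $ k \<noteq> 0" by (metis vec_eq_iff zero_index)
  have "(v $ k) *s u + (- (u $ k)) *s v = 0"
  proof (rule vec_eqI)
    fix l
    have "wedge u v $ k $ l = 0" using W by simp
    then show "((v $ k) *s u + (- (u $ k)) *s v) $ l = 0 $ l" by (simp add: algebra_simps)
  qed
  then have "- (u $ k) = 0" using assms unfolding indep2_def by blast
  then show False using k by simp
qed

lemma rank_wedge:
  fixes u v :: "'a::field^'n"
  assumes "indep2 u v"
  shows "rank (wedge u v) = 2"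
proof -
  have "rank (wedge u v) \<le> card {u, v}"
  proof (rule rank_le_card)
    fix p
    have w: "wedge u v $ p = (u $ p) *s v - (v $ p) *s u" by (simp add: vec_eq_iff)
    show "wedge u v $ p \<in> vec.span {u, v}"
      unfolding w by (simp add: vec.span_diff vec.span_scale vec.span_base)
  qed simp
  also have "\<dots> \<le> 2" by (simp add: card_insert_le_m1)
  finally have le: "rank (wedge u v) \<le> 2" .
  obtain u' v' where "rank (wedge u v - wedge u' v') + 2 \<le> rank (wedge u v)"
    using alt_red[OF wedge_alt wedge_ne0[OF assms]] by blast
  then show ?thesis using le by linarith
qed

lemma alt_rank2:
  fixes X :: "'a::field^'n^'n"
  assumes X: "X \<in> alt_verts" and r: "rank X = 2"
  shows "\<exists>u v. indep2 u v \<and> X = wedge u v"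
proof -
  have "X \<noteq> 0" using r by (metis rank_zero_iff zero_neq_numeral)
  then obtain u v where "indep2 u v" "rank (X - wedge u v) + 2 \<le> rank X" using alt_red[OF X] by blast
  then show ?thesis using r rank_zero_iff[of "X - wedge u v"] by auto
qed

lemma wedge_mult: "P ** wedge u v ** transpose P = wedge (P *v u) (P *v v)"
proof -
  have "P ** wedge u v ** transpose P = P ** outer u v ** transpose P - P ** outer v u ** transpose P"
    by (simp add: wedge_def vec_eq_iff matrix_matrix_mult_def sum_subtractf algebra_simps)
  then show ?thesis by (simp add: outer_mult wedge_def)
qed

lemma indep2_mult:
  assumes P: "P' ** P = mat 1" and ind: "indep2 u v"
  shows "indep2 (P *v u) (P *v v)"
  unfolding indep2_def
proof (intro allI impI)
  fix a b assume h: "a *s (P *v u) + b *s (P *v v) = 0"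
  have "P *v (a *s u + b *s v) = a *s (P *v u) + b *s (P *v v)"
    by (simp add: vec.scale vec.add)
  then have "P' *v (P *v (a *s u + b *s v)) = 0" using h by simp
  then have "a *s u + b *s v = 0" using P by (simp add: matrix_vector_mul_assoc)
  then show "a = 0 \<and> b = 0" using ind unfolding indep2_def by blast
qed

lemma skew_sum_zero:
  assumes "finite A" and sk: "\<And>a b. f a b = - f b a" and dg: "\<And>a. f a a = (0::'a::ab_group_add)"
  shows "(\<Sum>a\<in>A. \<Sum>b\<in>A. f a b) = 0"
  using assms(1)
proof (induction A rule: finite_induct)
  case empty then show ?case by simp
next
  case (insert x F)
  have "(\<Sum>a\<in>insert x F. \<Sum>b\<in>insert x F. f a b)
      = (f x x + (\<Sum>b\<in>F. f x b)) + (\<Sum>a\<in>F. f a x + (\<Sum>b\<in>F. f a b))"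
    using insert by (simp add: sum.insert)
  also have "\<dots> = (\<Sum>b\<in>F. f x b + f b x) + (\<Sum>a\<in>F. \<Sum>b\<in>F. f a b)"
    by (simp add: dg sum.distrib algebra_simps)
  also have "(\<Sum>b\<in>F. f x b + f b x) = 0" by (rule sum.neutral) (simp add: sk[of x])
  finally show ?case using insert.IH by simp
qed

lemma congr_entry: "(P ** X ** transpose P) $ p $ q = (\<Sum>a\<in>UNIV. \<Sum>b\<in>UNIV. P$p$a * X$a$b * P$q$b)"
  by (simp add: matrix_matrix_mult_def transpose_def sum_distrib_right) (rule sum.swap)

lemma alt_mult:
  fixes X :: "'a::field^'n^'n" and P :: "'a^'n^'n"
  assumes X: "X \<in> alt_verts"
  shows "P ** X ** transpose P \<in> alt_verts"
  unfolding alt_iff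
proof (intro conjI allI)
  fix p q
  have "(P ** X ** transpose P) $ q $ p = (\<Sum>a\<in>UNIV. \<Sum>b\<in>UNIV. P$q$a * X$a$b * P$p$b)"
    by (rule congr_entry)
  also have "\<dots> = (\<Sum>b\<in>UNIV. \<Sum>a\<in>UNIV. P$q$a * X$a$b * P$p$b)" by (rule sum.swap)
  also have "\<dots> = (\<Sum>b\<in>UNIV. \<Sum>a\<in>UNIV. - (P$p$b * X$b$a * P$q$a))"
  proof (intro sum.cong refl)
    fix a b
    have "X $ a $ b = - X $ b $ a" by (rule alt_skew[OF X])
    then show "P$q$a * X$a$b * P$p$b = - (P$p$b * X$b$a * P$q$a)" by (simp add: mult_ac)
  qed
  also have "\<dots> = - (P ** X ** transpose P) $ p $ q" by (simp add: congr_entry sum_negf)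
  finally show "(P ** X ** transpose P) $ q $ p = - (P ** X ** transpose P) $ p $ q" .
next
  fix i
  have "(P ** X ** transpose P) $ i $ i = (\<Sum>a\<in>UNIV. \<Sum>b\<in>UNIV. P$i$a * X$a$b * P$i$b)"
    by (rule congr_entry)
  also have "\<dots> = 0"
  proof (rule skew_sum_zero)
    fix a b
    have "X $ a $ b = - X $ b $ a" by (rule alt_skew[OF X])
    then show "P$i$a * X$a$b * P$i$b = - (P$i$b * X$b$a * P$i$a)" by (simp add: mult_ac)
  next
    fix a show "P$i$a * X$a$a * P$i$a = 0" by (simp add: alt_diag[OF X])
  qed simp
  finally show "(P ** X ** transpose P) $ i $ i = 0" .
qed

lemma rank2_mult:
  fixes Y :: "'a::field^'n^'n"
  assumes P: "P' ** P = mat 1" and Y: "Y \<in> alt_verts" and r: "rank Y = 2"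
  shows "rank (P ** Y ** transpose P) = 2"
proof -
  obtain u v where "indep2 u v" "Y = wedge u v" using alt_rank2[OF Y r] by blast
  then show ?thesis by (simp add: wedge_mult rank_wedge indep2_mult[OF P])
qed

lemma alt_indep_family:
  fixes u v :: "nat \<Rightarrow> 'a::field^'n"
  assumes r: "rank (\<Sum>j<l. wedge (u j) (v j)) = 2 * l"
  defines "b \<equiv> \<lambda>k. if even k then u (k div 2) else v (k div 2)"
  shows "inj_on b {..<2*l} \<and> vec.independent (b ` {..<2*l})"
proof (rule rank_indep)
  have ub: "u j \<in> b ` {..<2*l}" "v j \<in> b ` {..<2*l}" if "j < l" for j
  proof -
    show "u j \<in> b ` {..<2*l}" using that by (intro image_eqI[of _ _ "2*j"]) (auto simp: b_def)
    show "v j \<in> b ` {..<2*l}" using that by (intro image_eqI[of _ _ "2*j+1"]) (auto simp: b_def)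
  qed
  fix p
  have "(\<Sum>j<l. wedge (u j) (v j)) $ p = (\<Sum>j<l. u j $ p *s v j - v j $ p *s u j)"
    by (simp add: vec_eq_iff)
  also have "\<dots> \<in> vec.span (b ` {..<2*l})"
  proof (rule vec.span_sum)
    fix j assume "j \<in> {..<l}"
    then have "u j \<in> b ` {..<2*l}" "v j \<in> b ` {..<2*l}" using ub by auto
    then show "u j $ p *s v j - v j $ p *s u j \<in> vec.span (b ` {..<2*l})"
      by (intro vec.span_diff vec.span_scale vec.span_base)
  qed
  finally show "(\<Sum>j<l. wedge (u j) (v j)) $ p \<in> vec.span (b ` {..<2*l})" .
qed (use r in auto)

lemma alt_ext:
  fixes d d' :: "nat \<Rightarrow> 'a::field^'n^'n"
  assumes d: "\<forall>j<l. d j \<in> alt_verts \<and> rank (d j) = 2" and d': "\<forall>j<l. d' j \<in> alt_verts \<and> rank (d' j) = 2"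
    and s: "rank (sum d {..<l}) = 2 * l" and s': "rank (sum d' {..<l}) = 2 * l"
  shows "\<exists>L. (\<forall>X Y. L (X + Y) = L X + L Y) \<and> bij_betw L alt_verts alt_verts \<and>
              (\<forall>Y\<in>alt_verts. rank (L Y) = 2 \<longleftrightarrow> rank Y = 2) \<and> (\<forall>j<l. L (d j) = d' j)"
proof -
  have "\<exists>u v. \<forall>j<l. indep2 (u j) (v j) \<and> d j = wedge (u j) (v j)"
    by (rule choice2) (use d alt_rank2 in blast)
  then obtain u v where uv: "\<And>j. j < l \<Longrightarrow> indep2 (u j) (v j) \<and> d j = wedge (u j) (v j)" by blast
  have "\<exists>u v. \<forall>j<l. indep2 (u j) (v j) \<and> d' j = wedge (u j) (v j)"
    by (rule choice2) (use d' alt_rank2 in blast)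
  then obtain u' v' where uv': "\<And>j. j < l \<Longrightarrow> indep2 (u' j) (v' j) \<and> d' j = wedge (u' j) (v' j)" by blast
  have sd: "sum d {..<l} = (\<Sum>j<l. wedge (u j) (v j))"
    by (rule sum.cong) (simp_all add: uv)
  have sd': "sum d' {..<l} = (\<Sum>j<l. wedge (u' j) (v' j))"
    by (rule sum.cong) (simp_all add: uv')
  define b where "b \<equiv> \<lambda>k. if even k then u (k div 2) else v (k div 2)"
  define b' where "b' \<equiv> \<lambda>k. if even k then u' (k div 2) else v' (k div 2)"
  have ib: "inj_on b {..<2*l} \<and> vec.independent (b ` {..<2*l})"
    unfolding b_def by (rule alt_indep_family) (use s sd in simp)
  have ib': "inj_on b' {..<2*l} \<and> vec.independent (b' ` {..<2*l})"
    unfolding b'_def by (rule alt_indep_family) (use s' sd' in simp)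
  obtain P P' where P: "P' ** P = mat 1" "P ** P' = mat 1" "\<forall>k\<in>{..<2*l}. P *v b k = b' k"
    using exists_invertible[of "{..<2*l}" b b'] ib ib' by blast
  have Pu: "P *v u j = u' j" "P *v v j = v' j" if "j < l" for j
  proof -
    have "2*j \<in> {..<2*l}" "2*j+1 \<in> {..<2*l}" using that by auto
    then have "P *v b (2*j) = b' (2*j)" "P *v b (2*j+1) = b' (2*j+1)" using P(3) by blast+
    then show "P *v u j = u' j" "P *v v j = v' j" by (simp_all add: b_def b'_def)
  qed
  define L where "L X = P ** X ** transpose P" for X :: "'a^'n^'n"
  define L' where "L' X = P' ** X ** transpose P'" for X :: "'a^'n^'n"
  have tP: "transpose P ** transpose P' = mat 1" "transpose P' ** transpose P = mat 1"
    using P by (simp_all add: matrix_transpose_mul[symmetric])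
  have LL': "L' (L X) = X" "L (L' X) = X" for X
  proof -
    have "L' (L X) = (P' ** P) ** X ** (transpose P ** transpose P')"
      unfolding L_def L'_def by (simp add: matrix_mul_assoc)
    then show "L' (L X) = X" using P tP by simp
    have "L (L' X) = (P ** P') ** X ** (transpose P' ** transpose P)"
      unfolding L_def L'_def by (simp add: matrix_mul_assoc)
    then show "L (L' X) = X" using P tP by simp
  qed
  have Lalt: "L X \<in> alt_verts" "L' X \<in> alt_verts" if "X \<in> alt_verts" for X
    unfolding L_def L'_def using alt_mult[OF that] by auto
  show ?thesis
  proof (intro exI[of _ L] conjI allI ballI impI)
    show "L (X + Y) = L X + L Y" for X Y
      by (simp add: L_def matrix_add_ldistrib matrix_add_rdistrib')
    show "bij_betw L alt_verts alt_verts"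
      by (rule bij_betw_byWitness[where f' = L']) (auto simp: LL' Lalt)
    fix Y :: "'a^'n^'n" assume Y: "Y \<in> alt_verts"
    show "rank (L Y) = 2 \<longleftrightarrow> rank Y = 2"
    proof
      assume "rank (L Y) = 2"
      then have "rank (L' (L Y)) = 2" unfolding L'_def using rank2_mult[OF P(2) Lalt(1)[OF Y]] by blast
      then show "rank Y = 2" by (simp add: LL')
    next
      assume "rank Y = 2"
      then show "rank (L Y) = 2" unfolding L_def using rank2_mult[OF P(1) Y] by blast
    qed
  next
    fix j assume "j < l"
    then show "L (d j) = d' j" using uv[of j] uv'[of j] Pu[of j]
      by (simp add: L_def wedge_mult)
  qed
qed

lemma alt_gt: "geodesic_transitive (alt_verts :: ('a::field^'n^'n) set) alt_adj"
proof (rule gt_generic[where \<rho> = rank and s = 2])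
  show "alt_adj X Y \<longleftrightarrow> rank (X - Y) = 2" for X Y :: "'a^'n^'n" by (simp add: alt_adj_def)
  show "rank (- X) = rank X" for X :: "'a^'n^'n" by (rule rank_neg)
  show "rank (0::'a^'n^'n) = 0" by (simp add: rank_zero_iff)
  show "rank (X + D) \<le> rank X + 2" if "rank D = 2" for X D :: "'a^'n^'n"
    using rank_add[of X D] that by simp
  show "\<exists>D\<in>alt_verts. rank D = 2 \<and> rank (X - D) + 2 \<le> rank X"
    if "X \<in> alt_verts" "X \<noteq> 0" for X :: "'a^'n^'n"
    using alt_red[OF that] rank_wedge wedge_alt by blast
  show "\<exists>L. (\<forall>X Y. L (X + Y) = L X + L Y) \<and> bij_betw L alt_verts alt_verts \<and>
              (\<forall>Y\<in>alt_verts. rank (L Y) = 2 \<longleftrightarrow> rank Y = 2) \<and> (\<forall>j<l. L (d j) = d' j)"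
    if "\<forall>j<l. d j \<in> alt_verts \<and> rank (d j) = 2" "\<forall>j<l. d' j \<in> alt_verts \<and> rank (d' j) = 2"
      "rank (sum d {..<l}) = 2 * l" "rank (sum d' {..<l}) = 2 * l" for l and d d' :: "nat \<Rightarrow> 'a^'n^'n"
    using alt_ext[OF that] .
qed (auto simp: alt_0 alt_add alt_neg)

locale invol =
  fixes \<sigma> :: "'c::{field,finite} \<Rightarrow> 'c"
  assumes fa: "field_automorphism \<sigma>" and inv: "\<sigma> \<circ> \<sigma> = id" and ne: "\<sigma> \<noteq> id"
begin

lemma s_add[simp]: "\<sigma> (x + y) = \<sigma> x + \<sigma> y" using fa by (simp add: field_automorphism_def)
lemma s_mult[simp]: "\<sigma> (x * y) = \<sigma> x * \<sigma> y" using fa by (simp add: field_automorphism_def)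
lemma s_one[simp]: "\<sigma> 1 = 1" using fa by (simp add: field_automorphism_def)
lemma s_zero[simp]: "\<sigma> 0 = 0"
proof -
  have "\<sigma> 0 + \<sigma> 0 = \<sigma> 0 + 0" using s_add[of 0 0] by simp
  then show ?thesis by (rule add_left_imp_eq)
qed
lemma s_neg[simp]: "\<sigma> (- x) = - \<sigma> x" using s_add[of x "-x"] by (simp add: eq_neg_iff_add_eq_0 add.commute)
lemma s_diff[simp]: "\<sigma> (x - y) = \<sigma> x - \<sigma> y" using s_add[of x "-y"] by simp
lemma s_s[simp]: "\<sigma> (\<sigma> x) = x" using inv by (simp add: fun_eq_iff)
lemma s_eq0[simp]: "\<sigma> x = 0 \<longleftrightarrow> x = 0" by (metis s_s s_zero)
lemma s_inverse[simp]: "\<sigma> (inverse x) = inverse (\<sigma> x)"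
proof (cases "x = 0")
  case False
  have "\<sigma> x * \<sigma> (inverse x) = 1" using s_mult[of x "inverse x"] False by simp
  then show ?thesis by (metis inverse_unique)
qed simp
lemma s_divide[simp]: "\<sigma> (x / y) = \<sigma> x / \<sigma> y" by (simp add: divide_inverse)
lemma s_sum[simp]: "\<sigma> (sum f A) = (\<Sum>a\<in>A. \<sigma> (f a))"
  by (induction A rule: infinite_finite_induct) auto

lemma theta_ex: "\<exists>\<theta>. \<sigma> \<theta> \<noteq> \<theta>"
  using ne by (auto simp: fun_eq_iff)

lemma trace_ex: "\<exists>\<mu>. \<mu> + \<sigma> \<mu> \<noteq> 0"
proof (rule ccontr)
  assume "\<not> ?thesis"
  then have h: "\<mu> + \<sigma> \<mu> = 0" for \<mu> by blast
  obtain \<theta> where t: "\<sigma> \<theta> \<noteq> \<theta>" using theta_ex by blast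
  have two: "(1::'c) + 1 = 0" using h[of 1] by simp
  have "\<sigma> \<theta> = - \<theta>" using h[of \<theta>] by (simp add: eq_neg_iff_add_eq_0 add.commute)
  also have "- \<theta> = \<theta>" using two by (metis add.inverse_unique distrib_left mult.right_neutral mult_zero_right)
  finally show False using t by simp
qed

definition K :: "'c set" where "K = {x. \<sigma> x = x}"
definition H :: "'c set" where "H = {x. x * \<sigma> x = 1}"

lemma K_decomp:
  assumes t: "\<sigma> \<theta> \<noteq> \<theta>"
  shows "bij_betw (\<lambda>(a, b). a + b * \<theta>) (K \<times> K) UNIV"
proof -
  have d: "\<theta> - \<sigma> \<theta> \<noteq> 0" using t by simp
  have inj: "inj_on (\<lambda>(a, b). a + b * \<theta>) (K \<times> K)"
  proof (rule inj_onI, clarify)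
    fix a b a' b' assume K: "a \<in> K" "b \<in> K" "a' \<in> K" "b' \<in> K" and e: "a + b * \<theta> = a' + b' * \<theta>"
    have sK: "\<sigma> a = a" "\<sigma> b = b" "\<sigma> a' = a'" "\<sigma> b' = b'" using K by (auto simp: K_def)
    show "a = a' \<and> b = b'"
    proof (cases "b = b'")
      case True then show ?thesis using e by simp
    next
      case False
      have "\<theta> = (a' - a) / (b - b')" using e False by (simp add: field_simps)
      then have "\<sigma> \<theta> = \<theta>" using sK by simp
      then show ?thesis using t by simp
    qed
  qed
  have surj: "x \<in> (\<lambda>(a, b). a + b * \<theta>) ` (K \<times> K)" for x
  proof -
    define b where "b = (x - \<sigma> x) / (\<theta> - \<sigma> \<theta>)"
    define a where "a = x - b * \<theta>"
    have sb: "\<sigma> b = b" unfolding b_def using d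
      by (simp add: field_simps)
    have sa: "\<sigma> a = a" unfolding a_def using sb d
      by (simp add: b_def field_simps)
    have "x = a + b * \<theta>" by (simp add: a_def)
    then show ?thesis using sa sb by (auto simp: K_def intro!: image_eqI[of _ _ "(a, b)"])
  qed
  show ?thesis unfolding bij_betw_def using inj surj by auto
qed

lemma card_F: "card (UNIV :: 'c set) = card K * card K"
proof -
  obtain \<theta> where t: "\<sigma> \<theta> \<noteq> \<theta>" using theta_ex by blast
  have "card (K \<times> K) = card (UNIV :: 'c set)" using bij_betw_same_card[OF K_decomp[OF t]] .
  then show ?thesis by (simp add: card_cartesian_product)
qed

lemma card_H: "card H \<le> card K + 1"
proof -
  obtain \<theta> where t: "\<sigma> \<theta> \<noteq> \<theta>" using theta_ex by blast
  have d: "\<theta> - \<sigma> \<theta> \<noteq> 0" using t by simp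
  define \<phi> where "\<phi> y = y / \<sigma> y" for y
  have sub: "H \<subseteq> \<phi> ` (insert 1 ((\<lambda>a. a + \<theta>) ` K))"
  proof
    fix x assume "x \<in> H"
    then have hx: "x * \<sigma> x = 1" by (simp add: H_def)
    define c where "c = (if 1 + x \<noteq> 0 then 1 else \<theta>)"
    define y where "y = c + x * \<sigma> c"
    have y0: "y \<noteq> 0"
    proof (cases "1 + x = 0")
      case True
      then have "x = -1" by (simp add: eq_neg_iff_add_eq_0 add.commute)
      then show ?thesis using True d by (simp add: y_def c_def)
    next
      case False then show ?thesis by (simp add: y_def c_def)
    qed
    have "x * \<sigma> y = x * \<sigma> c + (x * \<sigma> x) * c" by (simp add: y_def algebra_simps)
    also have "\<dots> = y" using hx by (simp add: y_def)
    finally have xy: "x * \<sigma> y = y" .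
    have sy0: "\<sigma> y \<noteq> 0" using y0 by simp
    have "\<phi> y = x * \<sigma> y / \<sigma> y" unfolding \<phi>_def using xy by simp
    also have "\<dots> = x" using sy0 by simp
    finally have phx: "\<phi> y = x" .
    have "y \<in> (\<lambda>(a, b). a + b * \<theta>) ` (K \<times> K)"
      using bij_betw_imp_surj_on[OF K_decomp[OF t]] by simp
    then obtain a b where ab: "a \<in> K" "b \<in> K" "y = a + b * \<theta>" by auto
    have sab: "\<sigma> a = a" "\<sigma> b = b" using ab by (auto simp: K_def)
    show "x \<in> \<phi> ` (insert 1 ((\<lambda>a. a + \<theta>) ` K))"
    proof (cases "b = 0")
      case True
      then have "\<phi> y = 1" using ab sab y0 by (simp add: \<phi>_def)
      then show ?thesis using phx by (simp add: \<phi>_def)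
    next
      case False
      define g where "g = a / b"
      have gK: "g \<in> K" using sab by (simp add: K_def g_def)
      have "y = b * (g + \<theta>)" using False ab(3) by (simp add: g_def field_simps)
      then have "\<phi> y = \<phi> (g + \<theta>)" using False sab by (simp add: \<phi>_def)
      then show ?thesis using phx gK by auto
    qed
  qed
  have "card H \<le> card (\<phi> ` (insert 1 ((\<lambda>a. a + \<theta>) ` K)))" by (rule card_mono[OF _ sub]) simp
  also have "\<dots> \<le> card (insert 1 ((\<lambda>a. a + \<theta>) ` K))" by (rule card_image_le) simp
  also have "\<dots> \<le> card ((\<lambda>a. a + \<theta>) ` K) + 1" by (simp add: card_insert_if)
  also have "\<dots> \<le> card K + 1" using card_image_le[of K "\<lambda>a. a + \<theta>"] by simp
  finally show ?thesis .
qed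

lemma norm_surj:
  assumes a: "\<sigma> a = a" "a \<noteq> 0"
  shows "\<exists>k. \<sigma> k * k = a"
proof -
  define N where "N x = \<sigma> x * x" for x
  define Fs where "Fs = (UNIV - {0} :: 'c set)"
  define Ks where "Ks = K - {0}"
  define q where "q = card K"
  have NK: "N ` Fs \<subseteq> Ks"
    by (auto simp: N_def Fs_def Ks_def K_def mult.commute)
  define r where "r b = (SOME x. x \<in> Fs \<and> N x = b)" for b
  have cover: "Fs \<subseteq> (\<Union>b\<in>N ` Fs. (\<lambda>h. r b * h) ` H)"
  proof
    fix x assume x: "x \<in> Fs"
    define b where "b = N x"
    have "\<exists>x'. x' \<in> Fs \<and> N x' = b" using x b_def by blast
    then have "r b \<in> Fs \<and> N (r b) = b" unfolding r_def by (rule someI_ex)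
    then have rb: "r b \<in> Fs" "N (r b) = b" by auto
    have r0: "r b \<noteq> 0" "\<sigma> (r b) \<noteq> 0" using rb(1) by (auto simp: Fs_def)
    have x0: "x \<noteq> 0" using x by (simp add: Fs_def)
    define h where "h = x / r b"
    have "h * \<sigma> h = (x * \<sigma> x) / (r b * \<sigma> (r b))" by (simp add: h_def times_divide_times_eq)
    also have "\<dots> = (\<sigma> x * x) / (\<sigma> (r b) * r b)" by (simp add: mult.commute)
    also have "\<dots> = 1" using rb(2) r0 x0 by (simp add: b_def N_def)
    finally have hH: "h \<in> H" by (simp add: H_def)
    have "x = r b * h" using r0 by (simp add: h_def)
    then show "x \<in> (\<Union>b\<in>N ` Fs. (\<lambda>h. r b * h) ` H)" using hH x b_def by blast
  qed
  have "card Fs \<le> card (\<Union>b\<in>N ` Fs. (\<lambda>h. r b * h) ` H)" by (rule card_mono[OF _ cover]) simp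
  also have "\<dots> \<le> (\<Sum>b\<in>N ` Fs. card ((\<lambda>h. r b * h) ` H))" by (rule card_UN_le) simp
  also have "\<dots> \<le> (\<Sum>b\<in>N ` Fs. card H)" by (rule sum_mono) (simp add: card_image_le)
  also have "\<dots> = card (N ` Fs) * card H" by simp
  also have "\<dots> \<le> card (N ` Fs) * (q + 1)" using mult_le_mono2[OF card_H] by (simp add: q_def)
  finally have c1: "card Fs \<le> card (N ` Fs) * (q + 1)" .
  have K0: "0 \<in> K" by (simp add: K_def)
  have q1: "q \<ge> 1" using K0 by (auto simp: q_def Suc_le_eq card_gt_0_iff)
  have cFs: "card Fs = q * q - 1" using card_F by (simp add: Fs_def q_def)
  have cKs: "card Ks = q - 1" using K0 by (simp add: Ks_def q_def)
  have "(q - 1) * (q + 1) = q * q - 1" using q1 by (cases q) (auto simp: algebra_simps)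
  then have "(q - 1) * (q + 1) \<le> card (N ` Fs) * (q + 1)" using c1 cFs by simp
  then have "q - 1 \<le> card (N ` Fs)" using mult_le_cancel2[of "q - 1" "q + 1" "card (N ` Fs)"] by simp
  moreover have "card (N ` Fs) \<le> card Ks" by (rule card_mono[OF _ NK]) simp
  ultimately have "card (N ` Fs) = card Ks" using cKs by simp
  then have "N ` Fs = Ks" using card_subset_eq[OF _ NK] by simp
  moreover have "a \<in> Ks" using a by (simp add: Ks_def K_def)
  ultimately obtain x where "N x = a" by blast
  then show ?thesis by (auto simp: N_def)
qed

end

definition sv :: "('a \<Rightarrow> 'a) \<Rightarrow> 'a^'n \<Rightarrow> 'a^'n" where "sv s w = (\<chi> i. s (w$i))"
definition sm :: "('a \<Rightarrow> 'a) \<Rightarrow> 'a^'n^'m \<Rightarrow> 'a^'n^'m" where "sm s M = (\<chi> i j. s (M$i$j))"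

lemma sv_nth[simp]: "sv s w $ i = s (w $ i)" by (simp add: sv_def)
lemma sm_nth[simp]: "sm s M $ i $ j = s (M $ i $ j)" by (simp add: sm_def)

lemma outer_mv: "outer x y *v z = dotv y z *s x"
  by (simp add: vec_eq_iff matrix_vector_mult_def dotv_def sum_distrib_left mult_ac)

lemma dotv_add2: "dotv y (z + z') = dotv y z + dotv y z'"
  by (simp add: dotv_def distrib_left sum.distrib)
lemma dotv_scale2: "dotv y (c *s z) = c * dotv y z"
  by (simp add: dotv_def sum_distrib_left mult_ac)

context invol
begin

lemma her_iff: "X \<in> her_verts \<sigma> \<longleftrightarrow> (\<forall>i j. X $ j $ i = \<sigma> (X $ i $ j))"
  by (simp add: her_verts_def)

lemma her_iff': "X \<in> her_verts \<sigma> \<longleftrightarrow> (\<forall>i j. \<sigma> (X $ i $ j) = X $ j $ i)"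
  unfolding her_iff by (metis s_s)

lemma her_0: "0 \<in> her_verts \<sigma>" by (simp add: her_iff')
lemma her_add: "X \<in> her_verts \<sigma> \<Longrightarrow> Y \<in> her_verts \<sigma> \<Longrightarrow> X + Y \<in> her_verts \<sigma>"
  by (simp add: her_iff')
lemma her_neg: "X \<in> her_verts \<sigma> \<Longrightarrow> - X \<in> her_verts \<sigma>"
  by (simp add: her_iff')
lemma her_outer: "outer (sv \<sigma> w) w \<in> her_verts \<sigma>"
  by (simp add: her_iff' mult.commute)

lemma sv_eq0: "sv \<sigma> w = 0 \<longleftrightarrow> w = 0"
  by (simp add: vec_eq_iff)

lemma sm_mv: "sm \<sigma> Q *v sv \<sigma> w = sv \<sigma> (Q *v w)"
  by (simp add: vec_eq_iff matrix_vector_mult_def)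

lemma sm_mult: "sm \<sigma> A ** sm \<sigma> B = sm \<sigma> (A ** B)"
  by (simp add: vec_eq_iff matrix_matrix_mult_def)

lemma sm_mat1: "sm \<sigma> (mat 1) = mat 1"
  by (simp add: vec_eq_iff mat_def)

lemma her_rank_outer: "w \<noteq> 0 \<Longrightarrow> rank (outer (sv \<sigma> w) w) = 1"
  by (rule rank_outer) (simp_all add: sv_eq0)

lemma her_red:
  fixes X :: "'c^'n^'n"
  assumes X: "X \<in> her_verts \<sigma>" and X0: "X \<noteq> 0"
  shows "\<exists>w. w \<noteq> 0 \<and> rank (X - outer (sv \<sigma> w) w) + 1 \<le> rank X"
proof -
  have sx: "\<sigma> (X $ i $ j) = X $ j $ i" for i j using X by (simp add: her_iff')
  have "\<exists>i j l. X $ i $ i + \<sigma> l * X $ j $ i + l * (X $ i $ j + \<sigma> l * X $ j $ j) \<noteq> 0"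
  proof (cases "\<exists>i. X $ i $ i \<noteq> 0")
    case True
    then obtain i where "X $ i $ i \<noteq> 0" by blast
    then show ?thesis by (intro exI[of _ i] exI[of _ i] exI[of _ 0]) simp
  next
    case False
    then have dg: "X $ i $ i = 0" for i by blast
    obtain i j where a: "X $ i $ j \<noteq> 0" using X0 by (metis vec_eq_iff zero_index)
    obtain \<mu> where mu: "\<mu> + \<sigma> \<mu> \<noteq> 0" using trace_ex by blast
    define l where "l = \<mu> / X $ i $ j"
    have "X $ i $ i + \<sigma> l * X $ j $ i + l * (X $ i $ j + \<sigma> l * X $ j $ j) = \<sigma> (l * X $ i $ j) + l * X $ i $ j"
      by (simp add: dg sx algebra_simps)
    also have "\<dots> = \<sigma> \<mu> + \<mu>" using a by (simp add: l_def)
    finally show ?thesis using mu by (intro exI[of _ i] exI[of _ j] exI[of _ l]) (simp add: add.commute)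
  qed
  then obtain i j l where c0: "X $ i $ i + \<sigma> l * X $ j $ i + l * (X $ i $ j + \<sigma> l * X $ j $ j) \<noteq> 0"
    by blast
  define z :: "'c^'n" where "z = axis i 1 + l *s axis j 1"
  define y where "y = X $ i + \<sigma> l *s X $ j"
  define c where "c = dotv y z"
  have c_eq: "c = X $ i $ i + \<sigma> l * X $ j $ i + l * (X $ i $ j + \<sigma> l * X $ j $ j)"
    by (simp add: c_def z_def y_def dotv_add2 dotv_scale2 dotv_axis)
  have cne: "c \<noteq> 0" using c0 c_eq by simp
  have sc: "\<sigma> c = c" unfolding c_eq
    by (simp add: sx algebra_simps)
  have xy: "X *v z = sv \<sigma> y"
  proof (rule vec_eqI)
    fix p
    have "(X *v z) $ p = X $ p $ i + l * X $ p $ j"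
      by (simp add: mv_dotv z_def dotv_add2 dotv_scale2 dotv_axis)
    also have "\<dots> = sv \<sigma> y $ p" by (simp add: y_def sx)
    finally show "(X *v z) $ p = sv \<sigma> y $ p" .
  qed
  obtain k where k: "\<sigma> k * k = inverse c" using norm_surj[of "inverse c"] sc cne by auto
  define w where "w = k *s y"
  have y0: "y \<noteq> 0" using cne by (auto simp: c_def)
  have k0: "k \<noteq> 0" using k cne by auto
  have w0: "w \<noteq> 0" using y0 k0 by (simp add: w_def)
  have Deq: "outer (sv \<sigma> w) w = outer (inverse c *s sv \<sigma> y) y"
    by (simp add: vec_eq_iff w_def k[symmetric] mult_ac)
  have yspan: "y \<in> vec.span (range (\<lambda>i. X $ i))"
    by (simp add: y_def vec.span_add vec.span_scale vec.span_base)
  have "rank (X - outer (sv \<sigma> w) w) + 1 \<le> rank X"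
  proof (rule drop1[where z = z and y = y])
    fix p
    have "(X - outer (sv \<sigma> w) w) $ p = X $ p - (inverse c * \<sigma> (y $ p)) *s y"
      by (simp add: Deq vec_eq_iff)
    then show "(X - outer (sv \<sigma> w) w) $ p \<in> vec.span (range (\<lambda>i. X $ i))"
      using yspan by (simp add: vec.span_diff vec.span_scale vec.span_base)
  next
    have "(X - outer (sv \<sigma> w) w) *v z = X *v z - outer (inverse c *s sv \<sigma> y) y *v z"
      by (simp add: Deq matrix_vector_mult_diff_rdistrib)
    also have "\<dots> = 0" using cne by (simp add: outer_mv xy c_def[symmetric])
    finally show "(X - outer (sv \<sigma> w) w) *v z = 0" .
  next
    show "y \<in> vec.span (range (\<lambda>i. X $ i))" by (rule yspan)
  next
    show "dotv y z \<noteq> 0" using cne by (simp add: c_def)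
  qed
  then show ?thesis using w0 by blast
qed

end

context invol
begin

lemma her_rank1:
  fixes X :: "'c^'n^'n"
  assumes X: "X \<in> her_verts \<sigma>" and r: "rank X = 1"
  shows "\<exists>w. w \<noteq> 0 \<and> X = outer (sv \<sigma> w) w"
proof -
  have "X \<noteq> 0" using r by (metis rank_zero_iff zero_neq_one)
  then obtain w where "w \<noteq> 0" "rank (X - outer (sv \<sigma> w) w) + 1 \<le> rank X" using her_red[OF X] by blast
  then show ?thesis using r rank_zero_iff[of "X - outer (sv \<sigma> w) w"] by auto
qed

lemma sm_entry: "(sm \<sigma> Q ** X ** transpose Q) $ p $ q = (\<Sum>a\<in>UNIV. \<Sum>b\<in>UNIV. \<sigma> (Q$p$a) * X$a$b * Q$q$b)"
  by (simp add: matrix_matrix_mult_def transpose_def sum_distrib_right) (rule sum.swap)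

lemma her_mult:
  fixes X :: "'c^'n^'n" and Q :: "'c^'n^'n"
  assumes X: "X \<in> her_verts \<sigma>"
  shows "sm \<sigma> Q ** X ** transpose Q \<in> her_verts \<sigma>"
  unfolding her_iff'
proof (intro allI)
  fix p q
  have sx: "\<sigma> (X $ i $ j) = X $ j $ i" for i j using X by (simp add: her_iff')
  have "\<sigma> ((sm \<sigma> Q ** X ** transpose Q) $ p $ q) = (\<Sum>a\<in>UNIV. \<Sum>b\<in>UNIV. Q$p$a * X$b$a * \<sigma> (Q$q$b))"
    by (simp add: sm_entry sx)
  also have "\<dots> = (\<Sum>b\<in>UNIV. \<Sum>a\<in>UNIV. Q$p$a * X$b$a * \<sigma> (Q$q$b))" by (rule sum.swap)
  also have "\<dots> = (sm \<sigma> Q ** X ** transpose Q) $ q $ p"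
    by (simp add: sm_entry mult_ac)
  finally show "\<sigma> ((sm \<sigma> Q ** X ** transpose Q) $ p $ q) = (sm \<sigma> Q ** X ** transpose Q) $ q $ p" .
qed

lemma her_outer_mult: "sm \<sigma> Q ** outer (sv \<sigma> w) w ** transpose Q = outer (sv \<sigma> (Q *v w)) (Q *v w)"
  by (simp add: outer_mult sm_mv)

lemma rank1_her_mult:
  fixes Y :: "'c^'n^'n"
  assumes Q: "Q' ** Q = mat 1" and Y: "Y \<in> her_verts \<sigma>" and r: "rank Y = 1"
  shows "rank (sm \<sigma> Q ** Y ** transpose Q) = 1"
proof -
  obtain w where w: "w \<noteq> 0" "Y = outer (sv \<sigma> w) w" using her_rank1[OF Y r] by blast
  have "Q *v w \<noteq> 0"
  proof
    assume "Q *v w = 0"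
    then have "Q' *v (Q *v w) = 0" by simp
    then show False using Q w(1) by (simp add: matrix_vector_mul_assoc)
  qed
  then show ?thesis using w(2) by (simp add: her_outer_mult her_rank_outer)
qed

lemma her_indep:
  fixes w :: "nat \<Rightarrow> 'c^'n"
  assumes fin: "finite I" and r: "rank (\<Sum>j\<in>I. outer (sv \<sigma> (w j)) (w j)) = card I"
  shows "inj_on w I \<and> vec.independent (w ` I)"
proof (rule rank_indep[OF _ fin r])
  fix p
  have "(\<Sum>j\<in>I. outer (sv \<sigma> (w j)) (w j)) $ p = (\<Sum>j\<in>I. \<sigma> (w j $ p) *s w j)"
    by (simp add: vec_eq_iff)
  then show "(\<Sum>j\<in>I. outer (sv \<sigma> (w j)) (w j)) $ p \<in> vec.span (w ` I)"
    by (simp add: vec.span_sum vec.span_scale vec.span_base)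
qed

lemma her_ext:
  fixes d d' :: "nat \<Rightarrow> 'c^'n^'n"
  assumes d: "\<forall>j<l. d j \<in> her_verts \<sigma> \<and> rank (d j) = 1" and d': "\<forall>j<l. d' j \<in> her_verts \<sigma> \<and> rank (d' j) = 1"
    and s: "rank (sum d {..<l}) = 1 * l" and s': "rank (sum d' {..<l}) = 1 * l"
  shows "\<exists>L. (\<forall>X Y. L (X + Y) = L X + L Y) \<and> bij_betw L (her_verts \<sigma>) (her_verts \<sigma>) \<and>
              (\<forall>Y\<in>her_verts \<sigma>. rank (L Y) = 1 \<longleftrightarrow> rank Y = 1) \<and> (\<forall>j<l. L (d j) = d' j)"
proof -
  have "\<exists>w v. \<forall>j<l. w j \<noteq> 0 \<and> d j = outer (sv \<sigma> (w j)) (w j) \<and> v j = v j"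
    by (rule choice2) (use d her_rank1 in blast)
  then obtain w where w: "\<And>j. j < l \<Longrightarrow> w j \<noteq> 0 \<and> d j = outer (sv \<sigma> (w j)) (w j)" by blast
  have "\<exists>w v. \<forall>j<l. w j \<noteq> 0 \<and> d' j = outer (sv \<sigma> (w j)) (w j) \<and> v j = v j"
    by (rule choice2) (use d' her_rank1 in blast)
  then obtain w' where w': "\<And>j. j < l \<Longrightarrow> w' j \<noteq> 0 \<and> d' j = outer (sv \<sigma> (w' j)) (w' j)" by blast
  have sd: "sum d {..<l} = (\<Sum>j<l. outer (sv \<sigma> (w j)) (w j))"
    by (rule sum.cong) (simp_all add: w)
  have sd': "sum d' {..<l} = (\<Sum>j<l. outer (sv \<sigma> (w' j)) (w' j))"
    by (rule sum.cong) (simp_all add: w')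
  have a: "inj_on w {..<l} \<and> vec.independent (w ` {..<l})" by (rule her_indep) (use s sd in simp_all)
  have b: "inj_on w' {..<l} \<and> vec.independent (w' ` {..<l})" by (rule her_indep) (use s' sd' in simp_all)
  obtain Q Q' where Q: "Q' ** Q = mat 1" "Q ** Q' = mat 1" "\<forall>j\<in>{..<l}. Q *v w j = w' j"
    using exists_invertible[of "{..<l}" w w'] a b by blast
  define L where "L X = sm \<sigma> Q ** X ** transpose Q" for X :: "'c^'n^'n"
  define L' where "L' X = sm \<sigma> Q' ** X ** transpose Q'" for X :: "'c^'n^'n"
  have tQ: "transpose Q ** transpose Q' = mat 1" "transpose Q' ** transpose Q = mat 1"
    using Q by (simp_all add: matrix_transpose_mul[symmetric])
  have sQ: "sm \<sigma> Q' ** sm \<sigma> Q = mat 1" "sm \<sigma> Q ** sm \<sigma> Q' = mat 1"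
    using Q by (simp_all add: sm_mult sm_mat1)
  have LL': "L' (L X) = X" "L (L' X) = X" for X
  proof -
    have "L' (L X) = (sm \<sigma> Q' ** sm \<sigma> Q) ** X ** (transpose Q ** transpose Q')"
      unfolding L_def L'_def by (simp add: matrix_mul_assoc)
    then show "L' (L X) = X" using sQ tQ by simp
    have "L (L' X) = (sm \<sigma> Q ** sm \<sigma> Q') ** X ** (transpose Q' ** transpose Q)"
      unfolding L_def L'_def by (simp add: matrix_mul_assoc)
    then show "L (L' X) = X" using sQ tQ by simp
  qed
  have Lher: "L X \<in> her_verts \<sigma>" "L' X \<in> her_verts \<sigma>" if "X \<in> her_verts \<sigma>" for X
    unfolding L_def L'_def using her_mult[OF that] by auto
  show ?thesis
  proof (intro exI[of _ L] conjI allI ballI impI)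
    show "L (X + Y) = L X + L Y" for X Y
      by (simp add: L_def matrix_add_ldistrib matrix_add_rdistrib')
    show "bij_betw L (her_verts \<sigma>) (her_verts \<sigma>)"
      by (rule bij_betw_byWitness[where f' = L']) (auto simp: LL' Lher)
    fix Y :: "'c^'n^'n" assume Y: "Y \<in> her_verts \<sigma>"
    show "rank (L Y) = 1 \<longleftrightarrow> rank Y = 1"
    proof
      assume "rank (L Y) = 1"
      then have "rank (L' (L Y)) = 1" unfolding L'_def using rank1_her_mult[OF Q(2) Lher(1)[OF Y]] by blast
      then show "rank Y = 1" by (simp add: LL')
    next
      assume "rank Y = 1"
      then show "rank (L Y) = 1" unfolding L_def using rank1_her_mult[OF Q(1) Y] by blast
    qed
  next
    fix j assume "j < l"
    then show "L (d j) = d' j" using w[of j] w'[of j] Q(3)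
      by (simp add: L_def her_outer_mult)
  qed
qed

lemma her_gt: "geodesic_transitive (her_verts \<sigma> :: ('c^'n^'n) set) her_adj"
proof (rule gt_generic[where \<rho> = rank and s = 1])
  show "her_adj X Y \<longleftrightarrow> rank (X - Y) = 1" for X Y :: "'c^'n^'n" by (simp add: her_adj_def)
  show "rank (- X) = rank X" for X :: "'c^'n^'n" by (rule rank_neg)
  show "rank (0::'c^'n^'n) = 0" by (simp add: rank_zero_iff)
  show "rank (X + D) \<le> rank X + 1" if "rank D = 1" for X D :: "'c^'n^'n"
    using rank_add[of X D] that by simp
  show "\<exists>D\<in>her_verts \<sigma>. rank D = 1 \<and> rank (X - D) + 1 \<le> rank X"
    if "X \<in> her_verts \<sigma>" "X \<noteq> 0" for X :: "'c^'n^'n"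
    using her_red[OF that] her_rank_outer her_outer by blast
  show "\<exists>L. (\<forall>X Y. L (X + Y) = L X + L Y) \<and> bij_betw L (her_verts \<sigma>) (her_verts \<sigma>) \<and>
              (\<forall>Y\<in>her_verts \<sigma>. rank (L Y) = 1 \<longleftrightarrow> rank Y = 1) \<and> (\<forall>j<l. L (d j) = d' j)"
    if "\<forall>j<l. d j \<in> her_verts \<sigma> \<and> rank (d j) = 1" "\<forall>j<l. d' j \<in> her_verts \<sigma> \<and> rank (d' j) = 1"
      "rank (sum d {..<l}) = 1 * l" "rank (sum d' {..<l}) = 1 * l" for l and d d' :: "nat \<Rightarrow> 'c^'n^'n"
    using her_ext[OF that] .
qed (auto simp: her_0 her_add her_neg)

end

theorem proposition3p8:
  shows "(CARD('m::finite) \<le> CARD('k::finite) \<longrightarrow>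
           geodesic_transitive (UNIV :: ('a::{field,finite}^'k^'m) set) bil_adj)
       \<and> geodesic_transitive (alt_verts :: ('b::{field,finite}^'n::finite^'n) set) alt_adj
       \<and> (\<forall>(r::nat) (\<sigma>::'c::{field,finite} \<Rightarrow> 'c). CARD('c) = r ^ 2 \<and> field_automorphism \<sigma> \<and>
            \<sigma> \<circ> \<sigma> = id \<and> \<sigma> \<noteq> id \<longrightarrow>
            geodesic_transitive (her_verts \<sigma> :: ('c^'p::finite^'p) set) her_adj)"
proof (intro conjI impI allI)
  show "geodesic_transitive (UNIV :: ('a::{field,finite}^'k^'m) set) bil_adj" by (rule bil_gt)
  show "geodesic_transitive (alt_verts :: ('b::{field,finite}^'n::finite^'n) set) alt_adj" by (rule alt_gt)
  fix r :: nat and \<sigma> :: "'c::{field,finite} \<Rightarrow> 'c"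
  assume h: "CARD('c) = r ^ 2 \<and> field_automorphism \<sigma> \<and> \<sigma> \<circ> \<sigma> = id \<and> \<sigma> \<noteq> id"
  then interpret invol \<sigma> by unfold_locales auto
  show "geodesic_transitive (her_verts \<sigma> :: ('c^'p::finite^'p) set) her_adj" by (rule her_gt)
qed

end
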